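(* Let $X$ be a shift space over $\mathcal{A}$ and let $v\in\mathcal{L}(X)$ be a dendric bispecial factor. An injective and strongly left proper morphism $\sigma:\mathcal{A}^*\to\mathcal{B}^*$ is dendric preserving for $v$ if and only if (1) for every $s\in\mathcal{T}^-_v(\sigma)\setminus\{s_0\}$, the graph $\mathcal{E}_{X,s,p_0}(v)$ is a tree, and (2) for every $p\in\mathcal{T}^+_v(\sigma)\setminus\{p_0\}$, the graph $\mathcal{E}_{X,s_0,p}(v)$ is a tree.
   Context: A shift space over $\mathcal{A}$ is a closed shift-invariant $X\subseteq\mathcal{A}^{\mathbb{Z}}$ in which all letters occur, with factor set $\mathcal{L}(X)$. For $w\in\mathcal{L}(X)$: $E^-_X(w)=\{a:aw\in\mathcal{L}(X)\}$, $E^+_X(w)=\{b:wb\in\mathcal{L}(X)\}$, $E_X(w)=\{(a,b):awb\in\mathcal{L}(X)\}$; $\mathcal{E}_X(w)$ is the bipartite graph on left vertices $E^-_X(w)$ and right vertices $E^+_X(w)$ with edge set $E_X(w)$; $w$ is bispecial if $\#E^-_X(w)\ge2$ and $\#E^+_X(w)\ge2$; $w$ is dendric if $\mathcal{E}_X(w)$ is a tree. Morphisms are non-erasing; $\sigma$ is strongly left proper with first letter $\ell$ if every $\sigma(a)$ begins with $\ell$ and contains $\ell$ exactly once. The image of $X$ under $\sigma$ is $Y=\{S^k\sigma(x):x\in X,0\le k<|\sigma(x_0)|\}$. For non-empty $u\in\mathcal{L}(Y)$ containing $\ell$, there is a unique triple $(s,v,p)$, $v\in\mathcal{L}(X)$,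 $u=s\sigma(v)p$, with $s$ a proper suffix of $\sigma(a)$ and $p$ a non-empty prefix of $\sigma(b)$ for some $(a,b)\in E_X(v)$; $u$ is then an extended image of $v$. $\sigma$ is dendric preserving for $v$ if every bispecial extended image $u$ of $v$ is dendric in $Y$. Notation: $s(a_1,a_2)$/$p(b_1,b_2)$: longest common suffix of $\sigma(a_1),\sigma(a_2)$ / longest common prefix of $\sigma(b_1),\sigma(b_2)$. $\mathcal{T}^-_v(\sigma)=\{s(a_1,a_2):a_1\ne a_2\in E^-_X(v)\}$, $\mathcal{T}^+_v(\sigma)=\{p(b_1,b_2):b_1\ne b_2\in E^+_X(v)\}$; $s_0$ is the shortest element of $\mathcal{T}^-_v(\sigma)\cup\sigma(E^-_X(v))$ and $p_0$ the shortest element of $\mathcal{T}^+_v(\sigma)\cup\sigma(E^+_X(v))\ell$. For words $x,y$: $E^-_{X,x}(v)=\{a\in E^-_X(v):\sigma(a)\in\mathcal{B}^*x\}$, $E^+_{X,y}(v)=\{b\in E^+_X(v):\sigma(b)\ell\in y\mathcal{B}^*\}$, $E_{X,x,y}(v)=E_X(v)\cap(E^-_{X,x}(v)\times E^+_{X,y}(v))$, and $\mathcal{E}_{X,x,y}(v)$ is the subgraph of $\mathcal{E}_X(v)$ with edge set $E_{X,x,y}(v)$ and vertex set the vertices incident to these edges. *)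

theory Defs
  imports Main "HOL-Library.Sublist"
begin

definition occurs_at :: "'a list \<Rightarrow> (int \<Rightarrow> 'a) \<Rightarrow> int \<Rightarrow> bool" where
  "occurs_at w x i \<longleftrightarrow> (\<forall>k<length w. x (i + int k) = w ! k)"

definition lang :: "(int \<Rightarrow> 'a) set \<Rightarrow> 'a list set" where
  "lang X = {w. \<exists>x\<in>X. \<exists>i. occurs_at w x i}"

definition shift_map :: "(int \<Rightarrow> 'a) \<Rightarrow> (int \<Rightarrow> 'a)" where
  "shift_map x = (\<lambda>n. x (n + 1))"

text \<open>Closed in the product topology of discrete spaces: every sequence that agrees with
  elements of X on arbitrarily large central windows belongs to X.\<close>
definition closed_seqs :: "(int \<Rightarrow> 'a) set \<Rightarrow> bool" where
  "closed_seqs X \<longleftrightarrow>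
     (\<forall>y. (\<forall>n::nat. \<exists>x\<in>X. \<forall>i. \<bar>i\<bar> \<le> int n \<longrightarrow> x i = y i) \<longrightarrow> y \<in> X)"

definition shift_space :: "(int \<Rightarrow> 'a) set \<Rightarrow> bool" where
  "shift_space X \<longleftrightarrow> closed_seqs X \<and> shift_map ` X = X \<and> (\<forall>a. [a] \<in> lang X)"

definition left_ext :: "(int \<Rightarrow> 'a) set \<Rightarrow> 'a list \<Rightarrow> 'a set" where
  "left_ext X w = {a. a # w \<in> lang X}"

definition right_ext :: "(int \<Rightarrow> 'a) set \<Rightarrow> 'a list \<Rightarrow> 'a set" where
  "right_ext X w = {b. w @ [b] \<in> lang X}"

definition ext :: "(int \<Rightarrow> 'a) set \<Rightarrow> 'a list \<Rightarrow> ('a \<times> 'a) set" where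
  "ext X w = {(a, b). a # w @ [b] \<in> lang X}"

definition bispecial :: "(int \<Rightarrow> 'a) set \<Rightarrow> 'a list \<Rightarrow> bool" where
  "bispecial X w \<longleftrightarrow> w \<in> lang X \<and> card (left_ext X w) \<ge> 2 \<and> card (right_ext X w) \<ge> 2"

text \<open>A simple undirected graph given by a vertex set V and a symmetric adjacency relation.\<close>
definition ug_connected :: "'v set \<Rightarrow> ('v \<Rightarrow> 'v \<Rightarrow> bool) \<Rightarrow> bool" where
  "ug_connected V adj \<longleftrightarrow>
     (\<forall>u\<in>V. \<forall>w\<in>V. (u, w) \<in> {(x, y). x \<in> V \<and> y \<in> V \<and> adj x y}\<^sup>*)"

definition ug_cycle :: "'v set \<Rightarrow> ('v \<Rightarrow> 'v \<Rightarrow> bool) \<Rightarrow> 'v list \<Rightarrow> bool" where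
  "ug_cycle V adj cs \<longleftrightarrow> length cs \<ge> 3 \<and> distinct cs \<and> set cs \<subseteq> V \<and>
     (\<forall>i. Suc i < length cs \<longrightarrow> adj (cs ! i) (cs ! Suc i)) \<and> adj (last cs) (hd cs)"

definition ug_tree :: "'v set \<Rightarrow> ('v \<Rightarrow> 'v \<Rightarrow> bool) \<Rightarrow> bool" where
  "ug_tree V adj \<longleftrightarrow> V \<noteq> {} \<and> ug_connected V adj \<and> (\<nexists>cs. ug_cycle V adj cs)"

fun bip_adj :: "('a \<times> 'b) set \<Rightarrow> 'a + 'b \<Rightarrow> 'a + 'b \<Rightarrow> bool" where
  "bip_adj E (Inl a) (Inr b) \<longleftrightarrow> (a, b) \<in> E"
| "bip_adj E (Inr b) (Inl a) \<longleftrightarrow> (a, b) \<in> E"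
| "bip_adj E _ _ \<longleftrightarrow> False"

definition bip_tree :: "'a set \<Rightarrow> 'b set \<Rightarrow> ('a \<times> 'b) set \<Rightarrow> bool" where
  "bip_tree L R E \<longleftrightarrow> ug_tree (Inl ` L \<union> Inr ` R) (bip_adj E)"

definition dendric :: "(int \<Rightarrow> 'a) set \<Rightarrow> 'a list \<Rightarrow> bool" where
  "dendric X w \<longleftrightarrow> w \<in> lang X \<and> bip_tree (left_ext X w) (right_ext X w) (ext X w)"

definition morph :: "('a \<Rightarrow> 'b list) \<Rightarrow> 'a list \<Rightarrow> 'b list" where
  "morph \<sigma> w = concat (map \<sigma> w)"

definition strongly_left_proper :: "('a \<Rightarrow> 'b list) \<Rightarrow> 'b \<Rightarrow> bool" where
  "strongly_left_proper \<sigma> l \<longleftrightarrow> (\<forall>a. \<sigma> a \<noteq> [] \<and> hd (\<sigma> a) = l \<and> count_list (\<sigma> a) l = 1)"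

text \<open>Starting position of sigma(x_i) in sigma(x), sigma(x_0) starting at position 0.\<close>
definition img_pos :: "('a \<Rightarrow> 'b list) \<Rightarrow> (int \<Rightarrow> 'a) \<Rightarrow> int \<Rightarrow> int" where
  "img_pos \<sigma> x i =
     (if i \<ge> 0 then int (\<Sum>j<nat i. length (\<sigma> (x (int j))))
      else - int (\<Sum>j\<in>{1..nat (- i)}. length (\<sigma> (x (- int j)))))"

text \<open>y is the bi-infinite word sigma(x) = ... sigma(x_{-1}) . sigma(x_0) sigma(x_1) ...\<close>
definition is_image_seq :: "('a \<Rightarrow> 'b list) \<Rightarrow> (int \<Rightarrow> 'a) \<Rightarrow> (int \<Rightarrow> 'b) \<Rightarrow> bool" where
  "is_image_seq \<sigma> x y \<longleftrightarrow>
     (\<forall>i. \<forall>k<length (\<sigma> (x i)). y (img_pos \<sigma> x i + int k) = \<sigma> (x i) ! k)"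

definition image_shift :: "('a \<Rightarrow> 'b list) \<Rightarrow> (int \<Rightarrow> 'a) set \<Rightarrow> (int \<Rightarrow> 'b) set" where
  "image_shift \<sigma> X =
     {(\<lambda>n. y (n + int k)) | x y k. x \<in> X \<and> is_image_seq \<sigma> x y \<and> k < length (\<sigma> (x 0))}"

definition ext_image :: "('a \<Rightarrow> 'b list) \<Rightarrow> (int \<Rightarrow> 'a) set \<Rightarrow> 'a list \<Rightarrow> 'b list \<Rightarrow> bool" where
  "ext_image \<sigma> X v u \<longleftrightarrow> u \<in> lang (image_shift \<sigma> X) \<and>
     (\<exists>a b s p. (a, b) \<in> ext X v \<and> suffix s (\<sigma> a) \<and> s \<noteq> \<sigma> a \<and>
        prefix p (\<sigma> b) \<and> p \<noteq> [] \<and> u = s @ morph \<sigma> v @ p)"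

definition dendric_preserving :: "('a \<Rightarrow> 'b list) \<Rightarrow> (int \<Rightarrow> 'a) set \<Rightarrow> 'a list \<Rightarrow> bool" where
  "dendric_preserving \<sigma> X v \<longleftrightarrow>
     (\<forall>u. ext_image \<sigma> X v u \<longrightarrow> bispecial (image_shift \<sigma> X) u \<longrightarrow> dendric (image_shift \<sigma> X) u)"

fun lcp :: "'b list \<Rightarrow> 'b list \<Rightarrow> 'b list" where
  "lcp (x # xs) (y # ys) = (if x = y then x # lcp xs ys else [])"
| "lcp _ _ = []"

definition lcs :: "'b list \<Rightarrow> 'b list \<Rightarrow> 'b list" where
  "lcs xs ys = rev (lcp (rev xs) (rev ys))"

definition T_minus :: "('a \<Rightarrow> 'b list) \<Rightarrow> (int \<Rightarrow> 'a) set \<Rightarrow> 'a list \<Rightarrow> 'b list set" where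
  "T_minus \<sigma> X v = {lcs (\<sigma> a1) (\<sigma> a2) | a1 a2.
      a1 \<in> left_ext X v \<and> a2 \<in> left_ext X v \<and> a1 \<noteq> a2}"

definition T_plus :: "('a \<Rightarrow> 'b list) \<Rightarrow> (int \<Rightarrow> 'a) set \<Rightarrow> 'a list \<Rightarrow> 'b list set" where
  "T_plus \<sigma> X v = {lcp (\<sigma> b1) (\<sigma> b2) | b1 b2.
      b1 \<in> right_ext X v \<and> b2 \<in> right_ext X v \<and> b1 \<noteq> b2}"

definition s_zero :: "('a \<Rightarrow> 'b list) \<Rightarrow> (int \<Rightarrow> 'a) set \<Rightarrow> 'a list \<Rightarrow> 'b list" where
  "s_zero \<sigma> X v = arg_min length (\<lambda>s. s \<in> T_minus \<sigma> X v \<union> \<sigma> ` left_ext X v)"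

definition p_zero :: "('a \<Rightarrow> 'b list) \<Rightarrow> 'b \<Rightarrow> (int \<Rightarrow> 'a) set \<Rightarrow> 'a list \<Rightarrow> 'b list" where
  "p_zero \<sigma> l X v = arg_min length
     (\<lambda>p. p \<in> T_plus \<sigma> X v \<union> (\<lambda>b. \<sigma> b @ [l]) ` right_ext X v)"

definition left_ext_x :: "('a \<Rightarrow> 'b list) \<Rightarrow> (int \<Rightarrow> 'a) set \<Rightarrow> 'a list \<Rightarrow> 'b list \<Rightarrow> 'a set" where
  "left_ext_x \<sigma> X v x = {a \<in> left_ext X v. suffix x (\<sigma> a)}"

definition right_ext_y :: "('a \<Rightarrow> 'b list) \<Rightarrow> 'b \<Rightarrow> (int \<Rightarrow> 'a) set \<Rightarrow> 'a list \<Rightarrow> 'b list \<Rightarrow> 'a set" where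
  "right_ext_y \<sigma> l X v y = {b \<in> right_ext X v. prefix y (\<sigma> b @ [l])}"

definition ext_xy :: "('a \<Rightarrow> 'b list) \<Rightarrow> 'b \<Rightarrow> (int \<Rightarrow> 'a) set \<Rightarrow> 'a list \<Rightarrow> 'b list \<Rightarrow> 'b list \<Rightarrow> ('a \<times> 'a) set" where
  "ext_xy \<sigma> l X v x y = ext X v \<inter> (left_ext_x \<sigma> X v x \<times> right_ext_y \<sigma> l X v y)"

definition ext_xy_tree :: "('a \<Rightarrow> 'b list) \<Rightarrow> 'b \<Rightarrow> (int \<Rightarrow> 'a) set \<Rightarrow> 'a list \<Rightarrow> 'b list \<Rightarrow> 'b list \<Rightarrow> bool" where
  "ext_xy_tree \<sigma> l X v x y \<longleftrightarrow>
     bip_tree (fst ` ext_xy \<sigma> l X v x y) (snd ` ext_xy \<sigma> l X v x y) (ext_xy \<sigma> l X v x y)"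

end

theory Submission
  imports Defs
begin

definition Ered :: "'v set \<Rightarrow> ('v \<Rightarrow> 'v \<Rightarrow> bool) \<Rightarrow> ('v \<times> 'v) set" where
  "Ered V adj = {(x, y). x \<in> V \<and> y \<in> V \<and> adj x y}"

lemma ug_connected_Ered: "ug_connected V adj \<longleftrightarrow> (\<forall>u\<in>V. \<forall>w\<in>V. (u,w) \<in> (Ered V adj)\<^sup>*)"
  unfolding ug_connected_def Ered_def by simp

lemma ug_cycle_alt: "ug_cycle V adj cs \<longleftrightarrow> 3 \<le> length cs \<and> distinct cs \<and> set cs \<subseteq> V \<and>
   successively adj cs \<and> adj (last cs) (hd cs)"
  unfolding ug_cycle_def successively_conv_nth by blast

lemma ug_cycle_mono:
  assumes "ug_cycle V adj cs" "set cs \<subseteq> V'"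
    "\<And>x y. x \<in> set cs \<Longrightarrow> y \<in> set cs \<Longrightarrow> adj x y \<Longrightarrow> adj' x y"
  shows "ug_cycle V' adj' cs"
proof -
  from assms(1) have c: "3 \<le> length cs" "distinct cs" "successively adj cs" "adj (last cs) (hd cs)"
    by (auto simp: ug_cycle_alt)
  then have ne: "cs \<noteq> []" by auto
  have "successively adj' cs" using c(3) assms(3) by (rule successively_mono)
  moreover have "adj' (last cs) (hd cs)" using assms(3) c(4) ne by simp
  ultimately show ?thesis using c assms(2) by (simp add: ug_cycle_alt)
qed

lemma Ered_mono: "V \<subseteq> V' \<Longrightarrow> (\<And>x y. x \<in> V \<Longrightarrow> y \<in> V \<Longrightarrow> adj x y \<Longrightarrow> adj' x y) \<Longrightarrow>
  Ered V adj \<subseteq> Ered V' adj'"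
  unfolding Ered_def by auto

lemma rtrancl_Ered_mono: "(u,w) \<in> (Ered V adj)\<^sup>* \<Longrightarrow> V \<subseteq> V' \<Longrightarrow>
  (\<And>x y. x \<in> V \<Longrightarrow> y \<in> V \<Longrightarrow> adj x y \<Longrightarrow> adj' x y) \<Longrightarrow> (u,w) \<in> (Ered V' adj')\<^sup>*"
proof -
  assume a: "(u,w) \<in> (Ered V adj)\<^sup>*" "V \<subseteq> V'" "\<And>x y. x \<in> V \<Longrightarrow> y \<in> V \<Longrightarrow> adj x y \<Longrightarrow> adj' x y"
  have "Ered V adj \<subseteq> Ered V' adj'" using Ered_mono[OF a(2)] a(3) by blast
  then show ?thesis using a(1) rtrancl_mono by blast
qed

lemma ug_tree_cong:
  assumes "\<And>x y. x \<in> V \<Longrightarrow> y \<in> V \<Longrightarrow> adj x y = adj' x y"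
  shows "ug_tree V adj \<longleftrightarrow> ug_tree V adj'"
proof -
  have "Ered V adj = Ered V adj'" unfolding Ered_def using assms by auto
  then have c: "ug_connected V adj \<longleftrightarrow> ug_connected V adj'" by (simp add: ug_connected_Ered)
  have "ug_cycle V adj cs \<longleftrightarrow> ug_cycle V adj' cs" for cs
  proof
    assume a: "ug_cycle V adj cs"
    then have "set cs \<subseteq> V" by (simp add: ug_cycle_alt)
    then show "ug_cycle V adj' cs" using a assms by (intro ug_cycle_mono[OF a]) auto
  next
    assume a: "ug_cycle V adj' cs"
    then have "set cs \<subseteq> V" by (simp add: ug_cycle_alt)
    then show "ug_cycle V adj cs" using a assms by (intro ug_cycle_mono[OF a]) auto
  qed
  then show ?thesis using c unfolding ug_tree_def by simp
qed

lemma ug_cycle_rot: "ug_cycle V adj (a # xs) \<Longrightarrow> ug_cycle V adj (xs @ [a])"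
proof -
  assume a: "ug_cycle V adj (a # xs)"
  then have c: "3 \<le> length (a # xs)" "distinct (a # xs)" "set (a # xs) \<subseteq> V"
    "successively adj (a # xs)" "adj (last (a # xs)) (hd (a # xs))"
    by (auto simp only: ug_cycle_alt)
  then have ne: "xs \<noteq> []" by auto
  then have l: "last (a # xs) = last xs" by simp
  have s1: "successively adj xs" "adj a (hd xs)" using c(4) ne by (auto simp: successively_Cons)
  have "successively adj (xs @ [a])" using s1 c(5) l ne by (simp add: successively_append_iff)
  moreover have "adj (last (xs @ [a])) (hd (xs @ [a]))" using s1 ne by simp
  ultimately show ?thesis using c unfolding ug_cycle_alt by auto
qed

lemma ug_cycle_rot_gen: "ug_cycle V adj (pre @ ys) \<Longrightarrow> ug_cycle V adj (ys @ pre)"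
proof (induction pre arbitrary: ys)
  case Nil then show ?case by simp
next
  case (Cons a pre)
  have "ug_cycle V adj (pre @ (ys @ [a]))"
    using ug_cycle_rot[of V adj a "pre @ ys"] Cons.prems by simp
  from Cons.IH[OF this] show ?case by simp
qed

lemma ug_cycle_rotate_to:
  assumes "ug_cycle V adj cs" "x \<in> set cs"
  shows "\<exists>ys. ug_cycle V adj (x # ys) \<and> set ys = set cs - {x}"
proof -
  obtain pre post where cs: "cs = pre @ x # post" using split_list[OF assms(2)] by blast
  have "ug_cycle V adj ((x # post) @ pre)" using ug_cycle_rot_gen[of V adj pre "x # post"] assms(1) cs by simp
  moreover have "distinct cs" using assms(1) by (simp add: ug_cycle_alt)
  ultimately show ?thesis using cs by (intro exI[of _ "post @ pre"]) auto
qed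

definition qadj :: "'v set \<Rightarrow> ('v \<Rightarrow> 'v \<Rightarrow> bool) \<Rightarrow> ('v \<Rightarrow> 'w) \<Rightarrow> 'w \<Rightarrow> 'w \<Rightarrow> bool" where
  "qadj V adj h c d \<longleftrightarrow> (\<exists>u\<in>V. \<exists>w\<in>V. adj u w \<and> h u = c \<and> h w = d)"

lemma rtrancl_image:
  assumes "(u,w) \<in> (Ered V adj)\<^sup>*"
  shows "(h u, h w) \<in> (Ered (h ` V) (qadj V adj h))\<^sup>*"
  using assms
proof (induction rule: rtrancl_induct)
  case base then show ?case by simp
next
  case (step y z)
  then have "(h y, h z) \<in> Ered (h ` V) (qadj V adj h)"
    unfolding Ered_def qadj_def by auto
  with step.IH show ?case by (rule rtrancl_into_rtrancl)
qed

lemma connected_image: "ug_connected V adj \<Longrightarrow> ug_connected (h ` V) (qadj V adj h)"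
proof -
  assume "ug_connected V adj"
  then have "\<forall>u\<in>V. \<forall>w\<in>V. (u,w) \<in> (Ered V adj)\<^sup>*" by (simp add: ug_connected_Ered)
  then have "\<forall>u\<in>V. \<forall>w\<in>V. (h u, h w) \<in> (Ered (h ` V) (qadj V adj h))\<^sup>*"
    using rtrancl_image by metis
  then show ?thesis unfolding ug_connected_Ered by blast
qed

lemma tree_inj_image:
  assumes T: "ug_tree V adj" and inj: "inj_on h V"
  shows "ug_tree (h ` V) (qadj V adj h)"
proof -
  have "\<not> ug_cycle (h ` V) (qadj V adj h) cs" for cs
  proof
    assume cy: "ug_cycle (h ` V) (qadj V adj h) cs"
    define g where "g = the_inv_into V h"
    have sc: "set cs \<subseteq> h ` V" using cy by (simp add: ug_cycle_alt)
    have gadj: "adj (g c) (g d)" if "qadj V adj h c d" for c d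
    proof -
      from that obtain u w where "u \<in> V" "w \<in> V" "adj u w" "h u = c" "h w = d"
        unfolding qadj_def by blast
      then show ?thesis unfolding g_def using the_inv_into_f_f[OF inj] by auto
    qed
    have gV: "g c \<in> V" if "c \<in> h ` V" for c
      unfolding g_def using the_inv_into_into[OF inj that] by simp
    have ginj: "inj_on g (h ` V)" unfolding g_def by (rule inj_on_the_inv_into[OF inj])
    have c: "3 \<le> length cs" "distinct cs" "successively (qadj V adj h) cs"
      "qadj V adj h (last cs) (hd cs)" using cy by (auto simp: ug_cycle_alt)
    have ne: "cs \<noteq> []" using c by auto
    have "ug_cycle V adj (map g cs)"
      unfolding ug_cycle_alt
    proof (intro conjI)
      show "3 \<le> length (map g cs)" using c by simp
      show "distinct (map g cs)" using c(2) inj_on_subset[OF ginj sc] by (simp add: distinct_map)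
      show "set (map g cs) \<subseteq> V" using sc gV by auto
      show "successively adj (map g cs)" unfolding successively_map
        using c(3) by (rule successively_mono) (rule gadj)
      show "adj (last (map g cs)) (hd (map g cs))" using ne c(4) gadj by (simp add: last_map hd_map)
    qed
    then show False using T unfolding ug_tree_def by blast
  qed
  then show ?thesis using T connected_image unfolding ug_tree_def by blast
qed


lemma merge_helper:
  assumes V: "set ys \<subseteq> V" "a \<in> V" "b \<in> V" "z \<in> V"
    and d: "distinct ys" "2 \<le> length ys" "a \<notin> set ys" "b \<notin> set ys" "a \<noteq> b" "z \<noteq> a" "z \<noteq> b"
    and s: "successively adj ys" "adj a (hd ys)" "adj (last ys) b" "adj z a" "adj b z"
  shows "\<exists>cs. ug_cycle V adj cs"
proof (cases "z \<in> set ys")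
  case False
  have ne: "ys \<noteq> []" using d(2) by auto
  have "successively adj (ys @ [b, z])" using s ne by (simp add: successively_append_iff)
  then have "successively adj (a # ys @ [b, z])" using s(2) ne by (simp add: successively_Cons)
  then have "ug_cycle V adj (a # ys @ [b, z])"
    unfolding ug_cycle_alt using V d s False ne by auto
  then show ?thesis by blast
next
  case True
  then obtain A B where ys: "ys = A @ z # B" using split_list by metis
  have e1: "successively adj ((A @ [z]) @ B)" "successively adj (A @ (z # B))" using s(1) ys by auto
  have sA: "successively adj (A @ [z])" "successively adj (z # B)"
    using e1 unfolding successively_append_iff[of adj "A @ [z]" B] successively_append_iff[of adj A "z # B"]
    by blast+
  show ?thesis
  proof (cases "A = []")
    case False
    have hA: "hd ys = hd A" using False ys by simp
    have "ug_cycle V adj (a # A @ [z])"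
      unfolding ug_cycle_alt using V d s False sA hA ys
      by (cases A) (auto simp: successively_append_iff)
    then show ?thesis by blast
  next
    case True
    then have ys': "ys = z # B" using ys by simp
    then have "B \<noteq> []" using d(2) by auto
    have "successively adj ((z # B) @ [b])"
      unfolding successively_append_iff using sA(2) s(3) ys' by auto
    then have "ug_cycle V adj (z # B @ [b])"
      unfolding ug_cycle_alt using V d s sA ys' by auto
    then show ?thesis by blast
  qed
qed

lemma tree_merge:
  assumes T: "ug_tree V adj" and sym: "\<And>u w. adj u w \<Longrightarrow> adj w u"
    and V: "x \<in> V" "y \<in> V" "z \<in> V" and d: "x \<noteq> y" "z \<noteq> x" "z \<noteq> y"
    and a: "adj x z" "adj z y"
    and m: "m = (\<lambda>v. if v = y then x else v)"
  shows "ug_tree (m ` V) (qadj V adj m)"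
proof -
  let ?q = "qadj V adj m"
  have mV: "m ` V \<subseteq> V" "y \<notin> m ` V" using V d unfolding m by auto
  have qx: "u \<noteq> x \<Longrightarrow> w \<noteq> x \<Longrightarrow> ?q u w \<Longrightarrow> adj u w" for u w
    unfolding qadj_def m by (auto split: if_splits)
  have qx1: "w \<noteq> x \<Longrightarrow> ?q x w \<Longrightarrow> adj x w \<or> adj y w" for w
    unfolding qadj_def m by (auto split: if_splits)
  have qx2: "w \<noteq> x \<Longrightarrow> ?q w x \<Longrightarrow> adj w x \<or> adj w y" for w
    unfolding qadj_def m by (auto split: if_splits)
  have nocyc: "\<nexists>cs. ug_cycle V adj cs" using T unfolding ug_tree_def by blast
  have "\<not> ug_cycle (m ` V) ?q cs" for cs
  proof
    assume cy: "ug_cycle (m ` V) ?q cs"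
    show False
    proof (cases "x \<in> set cs")
      case False
      have "ug_cycle V adj cs"
        using cy mV False by (intro ug_cycle_mono[OF cy]) (auto simp: ug_cycle_alt intro: qx)
      then show False using nocyc by blast
    next
      case True
      then obtain ys where cy2: "ug_cycle (m ` V) ?q (x # ys)" and sys: "set ys = set cs - {x}"
        using ug_cycle_rotate_to[OF cy] by blast
      have c: "3 \<le> length (x # ys)" "distinct (x # ys)" "set (x # ys) \<subseteq> m ` V"
        "successively ?q (x # ys)" "?q (last (x # ys)) (hd (x # ys))"
        using cy2 unfolding ug_cycle_alt by auto
      have ne: "ys \<noteq> []" using c(1) by auto
      have ysV: "set ys \<subseteq> V" "x \<notin> set ys" "y \<notin> set ys" using c mV by auto
      have s1: "successively ?q ys" "?q x (hd ys)" using c(4) ne by (auto simp: successively_Cons)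
      have s2: "?q (last ys) x" using c(5) ne by simp
      have sa: "successively adj ys"
        using s1(1) by (rule successively_mono) (use ysV in \<open>auto intro: qx\<close>)
      have hx: "hd ys \<noteq> x" "last ys \<noteq> x" using ne ysV by auto
      have h1: "adj x (hd ys) \<or> adj y (hd ys)" using qx1[OF hx(1) s1(2)] .
      have h2: "adj (last ys) x \<or> adj (last ys) y" using qx2[OF hx(2) s2] .
      have len: "2 \<le> length ys" "distinct ys" using c by auto
      show False
      proof -
        { assume "adj x (hd ys)" "adj (last ys) x"
          then have "ug_cycle V adj (x # ys)" using c ysV V sa ne len
            unfolding ug_cycle_alt by (auto simp: successively_Cons)
          then have False using nocyc by blast }
        moreover
        { assume "adj y (hd ys)" "adj (last ys) y"
          then have "ug_cycle V adj (y # ys)" using c ysV V sa ne len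
            unfolding ug_cycle_alt by (auto simp: successively_Cons)
          then have False using nocyc by blast }
        moreover
        { assume "adj x (hd ys)" "adj (last ys) y"
          then have "\<exists>cs. ug_cycle V adj cs"
            using merge_helper[of ys V x y z adj] ysV V d len sa a sym by auto
          then have False using nocyc by blast }
        moreover
        { assume "adj y (hd ys)" "adj (last ys) x"
          then have "\<exists>cs. ug_cycle V adj cs"
            using merge_helper[of ys V y x z adj] ysV V d len sa a sym by auto
          then have False using nocyc by blast }
        ultimately show False using h1 h2 by blast
      qed
    qed
  qed
  moreover have "m ` V \<noteq> {}" using V by auto
  moreover have "ug_connected (m ` V) ?q" using T connected_image unfolding ug_tree_def by blast
  ultimately show ?thesis unfolding ug_tree_def by blast
qed


definition Rcl :: "'v set \<Rightarrow> ('v \<Rightarrow> 'v \<Rightarrow> bool) \<Rightarrow> ('v \<Rightarrow> 'w) \<Rightarrow> ('v \<times> 'v) set" where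
  "Rcl V adj h = {(u,w). u \<in> V \<and> w \<in> V \<and> u \<noteq> w \<and> h u = h w \<and> (\<exists>z\<in>V. adj u z \<and> adj z w)}"

lemma quot_tree:
  assumes "finite V" "ug_tree V adj" "\<And>u w. adj u w \<Longrightarrow> adj w u"
    "\<And>u w. u \<in> V \<Longrightarrow> w \<in> V \<Longrightarrow> adj u w \<Longrightarrow> h u \<noteq> h w"
    "\<And>u w. u \<in> V \<Longrightarrow> w \<in> V \<Longrightarrow> h u = h w \<Longrightarrow> (u,w) \<in> (Rcl V adj h)\<^sup>*"
  shows "ug_tree (h ` V) (qadj V adj h)"
  using assms
proof (induction "card V" arbitrary: V adj rule: less_induct)
  case less
  show ?case
  proof (cases "inj_on h V")
    case True
    then show ?thesis using tree_inj_image less.prems by blast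
  next
    case False
    then obtain x y where xy: "x \<in> V" "y \<in> V" "x \<noteq> y" "h x = h y" unfolding inj_on_def by blast
    have "(x,y) \<in> (Rcl V adj h)\<^sup>+" using less.prems(5)[OF xy(1,2,4)] xy(3)
      by (simp add: rtrancl_eq_or_trancl)
    then obtain w where "(x,w) \<in> Rcl V adj h" by (meson converse_tranclE)
    then obtain z where w: "w \<in> V" "x \<noteq> w" "h x = h w" "z \<in> V" "adj x z" "adj z w"
      unfolding Rcl_def by blast
    have zx: "z \<noteq> x" "z \<noteq> w" using less.prems(4) w xy by (metis)+
    define m where "m = (\<lambda>v. if v = w then x else v)"
    define V' where "V' = m ` V"
    define adj' where "adj' = qadj V adj m"
    have T': "ug_tree V' adj'" unfolding V'_def adj'_def
      using tree_merge[OF less.prems(2) less.prems(3) xy(1) w(1) w(4) w(2) zx w(5) w(6) m_def] .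
    have V'eq: "V' = V - {w}" unfolding V'_def m_def using xy(1) w(2) by auto
    have card: "card V' < card V" using V'eq less.prems(1) w(1) by (metis card_Diff1_less)
    have hm: "h (m v) = h v" for v unfolding m_def using w(3) by simp
    have sym': "adj' u u' \<Longrightarrow> adj' u' u" for u u'
      unfolding adj'_def qadj_def using less.prems(3) by blast
    have resp': "h u \<noteq> h u'" if "u \<in> V'" "u' \<in> V'" "adj' u u'" for u u'
    proof -
      from that(3) obtain u0 w0 where "u0 \<in> V" "w0 \<in> V" "adj u0 w0" "m u0 = u" "m w0 = u'"
        unfolding adj'_def qadj_def by blast
      then show ?thesis using less.prems(4) hm by metis
    qed
    have step: "(m a, m b) \<in> (Rcl V' adj' h)\<^sup>*" if "(a,b) \<in> Rcl V adj h" for a b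
    proof (cases "m a = m b")
      case True then show ?thesis by simp
    next
      case False
      from that obtain c where c: "a \<in> V" "b \<in> V" "h a = h b" "c \<in> V" "adj a c" "adj c b"
        unfolding Rcl_def by blast
      have "adj' (m a) (m c)" "adj' (m c) (m b)" unfolding adj'_def qadj_def using c by blast+
      moreover have "m a \<in> V'" "m b \<in> V'" "m c \<in> V'" unfolding V'_def using c by auto
      ultimately have "(m a, m b) \<in> Rcl V' adj' h" unfolding Rcl_def using False c(3) hm by auto
      then show ?thesis by simp
    qed
    have conn': "(u, u') \<in> (Rcl V' adj' h)\<^sup>*" if "u \<in> V'" "u' \<in> V'" "h u = h u'" for u u'
    proof -
      have uV: "u \<in> V" "u' \<in> V" "m u = u" "m u' = u'" using that V'eq m_def by auto
      have r: "(u, u') \<in> (Rcl V adj h)\<^sup>*" using less.prems(5)[OF uV(1,2) that(3)] .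
      have "(m u, m u') \<in> (Rcl V' adj' h)\<^sup>*" using r
      proof (induction rule: rtrancl_induct)
        case base then show ?case by simp
      next
        case (step a b)
        then show ?case using step(3) \<open>(a,b) \<in> Rcl V adj h\<close>
          by (meson rtrancl_trans \<open>\<And>b a. (a, b) \<in> Rcl V adj h \<Longrightarrow> (m a, m b) \<in> (Rcl V' adj' h)\<^sup>*\<close>)
      qed
      then show ?thesis using uV by simp
    qed
    have fin': "finite V'" using V'eq less.prems(1) by simp
    have IH: "ug_tree (h ` V') (qadj V' adj' h)"
      using less.hyps[OF card fin' T' sym' resp' conn'] by blast
    have e1: "h ` V' = h ` V" unfolding V'_def using hm by (auto simp: image_image)
    have e2: "qadj V' adj' h = qadj V adj h"
      unfolding V'_def adj'_def qadj_def using hm by (intro ext) (auto, metis)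
    show ?thesis using IH e1 e2 by simp
  qed
qed


fun pairs :: "'v list \<Rightarrow> ('v \<times> 'v) set" where
  "pairs (a # b # xs) = insert (a,b) (pairs (b # xs))"
| "pairs _ = {}"

lemma successively_pairs: "successively adj xs \<longleftrightarrow> (\<forall>(a,b)\<in>pairs xs. adj a b)"
  by (induction xs rule: pairs.induct) auto

lemma pairs_append: "pairs (xs @ y # ys) = pairs (xs @ [y]) \<union> pairs (y # ys)"
  by (induction xs rule: induct_list012) auto

lemma pairs_mem: "(a,b) \<in> pairs xs \<Longrightarrow> a \<in> set xs \<and> b \<in> set xs"
  by (induction xs rule: pairs.induct) auto

definition walk :: "'v set \<Rightarrow> ('v \<Rightarrow> 'v \<Rightarrow> bool) \<Rightarrow> 'v list \<Rightarrow> bool" where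
  "walk V adj xs \<longleftrightarrow> xs \<noteq> [] \<and> set xs \<subseteq> V \<and> (\<forall>(a,b)\<in>pairs xs. adj a b)"

lemma rtrancl_walk:
  assumes "(u,w) \<in> (Ered V adj)\<^sup>*" "u \<in> V"
  shows "\<exists>xs. walk V adj xs \<and> hd xs = u \<and> last xs = w"
  using assms
proof (induction rule: rtrancl_induct)
  case base
  then show ?case by (intro exI[of _ "[u]"]) (simp add: walk_def)
next
  case (step y z)
  then obtain xs where xs: "walk V adj xs" "hd xs = u" "last xs = y" by blast
  have yz: "y \<in> V" "z \<in> V" "adj y z" using step(2) unfolding Ered_def by auto
  have ne: "xs \<noteq> []" using xs(1) unfolding walk_def by simp
  obtain B where B: "xs = B @ [y]" using ne xs(3) by (metis append_butlast_last_id)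
  have p: "pairs (xs @ [z]) = pairs xs \<union> {(y,z)}"
    unfolding B using pairs_append[of B y "[z]"] by auto
  have "walk V adj (xs @ [z])" using xs(1) yz p unfolding walk_def by auto
  moreover have "hd (xs @ [z]) = u" using ne xs by simp
  ultimately show ?case by (intro exI[of _ "xs @ [z]"]) simp
qed

lemma pairs_Cons: "xs \<noteq> [] \<Longrightarrow> pairs (x # xs) = insert (x, hd xs) (pairs xs)"
  by (cases xs) auto

lemma pairs_snoc: "pairs (xs @ [x]) = pairs xs \<union> (if xs = [] then {} else {(last xs, x)})"
  by (induction xs rule: induct_list012) auto

lemma walk_rtrancl: "walk V adj xs \<Longrightarrow> (hd xs, last xs) \<in> (Ered V adj)\<^sup>*"
proof (induction xs)
  case Nil then show ?case by (simp add: walk_def)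
next
  case (Cons x xs)
  show ?case
  proof (cases "xs = []")
    case True then show ?thesis by simp
  next
    case False
    have "walk V adj xs" using Cons.prems False unfolding walk_def by (auto simp: pairs_Cons)
    then have "(hd xs, last xs) \<in> (Ered V adj)\<^sup>*" using Cons.IH by simp
    moreover have "(x, hd xs) \<in> Ered V adj" using Cons.prems False hd_in_set[OF False]
      unfolding walk_def Ered_def by (auto simp: pairs_Cons)
    ultimately show ?thesis using False by (simp add: converse_rtrancl_into_rtrancl)
  qed
qed

lemma walk_mono: "walk V adj xs \<Longrightarrow> V \<subseteq> V' \<Longrightarrow> walk V' adj xs"
  unfolding walk_def by auto

lemma loop_erase:
  assumes "walk V adj xs"
  shows "\<exists>ys. walk V adj ys \<and> distinct ys \<and> hd ys = hd xs \<and> last ys = last xs \<and>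
     set ys \<subseteq> set xs \<and> pairs ys \<subseteq> pairs xs"
  using assms
proof (induction "length xs" arbitrary: xs rule: less_induct)
  case less
  show ?case
  proof (cases "distinct xs")
    case True then show ?thesis using less.prems by blast
  next
    case False
    then obtain A y B C where xs: "xs = A @ [y] @ B @ [y] @ C" using not_distinct_decomp by blast
    define xs' where "xs' = A @ y # C"
    have len: "length xs' < length xs" unfolding xs xs'_def by simp
    have p1: "pairs xs' = pairs (A @ [y]) \<union> pairs (y # C)" unfolding xs'_def by (rule pairs_append)
    have p2: "pairs xs = pairs (A @ [y]) \<union> pairs ((y # B) @ y # C)"
      unfolding xs using pairs_append[of A y "B @ y # C"] by simp
    have p3: "pairs ((y # B) @ y # C) = pairs ((y # B) @ [y]) \<union> pairs (y # C)" by (rule pairs_append)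
    have psub: "pairs xs' \<subseteq> pairs xs" using p1 p2 p3 by blast
    have ssub: "set xs' \<subseteq> set xs" unfolding xs xs'_def by auto
    have w': "walk V adj xs'" using less.prems psub ssub unfolding walk_def xs'_def by auto
    have hd': "hd xs' = hd xs" unfolding xs xs'_def by (cases A) auto
    have last': "last xs' = last xs" unfolding xs xs'_def by (cases C) auto
    obtain ys where "walk V adj ys" "distinct ys" "hd ys = hd xs'" "last ys = last xs'"
      "set ys \<subseteq> set xs'" "pairs ys \<subseteq> pairs xs'"
      using less.hyps[OF len w'] by blast
    then show ?thesis using hd' last' psub ssub by (intro exI[of _ ys]) auto
  qed
qed

lemma pairs_rev: "(a,b) \<in> pairs (rev xs) \<Longrightarrow> (b,a) \<in> pairs xs"
proof (induction xs)
  case Nil then show ?case by simp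
next
  case (Cons x xs)
  show ?case
  proof (cases "xs = []")
    case True then show ?thesis using Cons.prems by simp
  next
    case False
    have "pairs (rev (x # xs)) = pairs (rev xs) \<union> {(hd xs, x)}"
      using pairs_snoc[of "rev xs" x] False by (simp add: last_rev)
    then show ?thesis using Cons False by (auto simp: pairs_Cons)
  qed
qed

lemma walk_rev: "walk V adj xs \<Longrightarrow> (\<And>u w. adj u w \<Longrightarrow> adj w u) \<Longrightarrow> walk V adj (rev xs)"
  unfolding walk_def using pairs_rev by fastforce

lemma path_cover:
  assumes nocyc: "\<nexists>cs. ug_cycle V adj cs" and sym: "\<And>u w. adj u w \<Longrightarrow> adj w u"
  shows "walk V adj P \<Longrightarrow> distinct P \<Longrightarrow> walk V adj W \<Longrightarrow> hd W = hd P \<Longrightarrow> last W = last P \<Longrightarrow>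
    set P \<subseteq> set W"
proof (induction P arbitrary: W rule: induct_list012)
  case 1 then show ?case by (simp add: walk_def)
next
  case (2 x) then show ?case using hd_in_set[of W] by (auto simp: walk_def)
next
  case (3 x x2 rest)
  let ?P2 = "x2 # rest"
  let ?y = "last ?P2"
  have Wne: "W \<noteq> []" using "3.prems"(3) by (simp add: walk_def)
  have axx2: "adj x x2" using "3.prems"(1) by (simp add: walk_def)
  have wP2: "walk V adj ?P2" using "3.prems"(1) by (auto simp: walk_def)
  have x2W: "x2 \<in> set W"
  proof (rule ccontr)
    assume nx2: "x2 \<notin> set W"
    have rWne: "rev W \<noteq> []" using Wne by simp
    have hrW: "hd (rev W) = ?y" using "3.prems"(5) Wne by (simp add: hd_rev)
    obtain T where rW: "rev W = ?y # T" using rWne hrW by (metis list.collapse)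
    obtain B where B: "?P2 = B @ [?y]" by (metis append_butlast_last_id list.distinct(1))
    define Z where "Z = B @ rev W"
    have pZ: "pairs Z = pairs ?P2 \<union> pairs (rev W)"
      unfolding Z_def rW using pairs_append[of B ?y T] B by simp
    have wrW: "walk V adj (rev W)" using walk_rev[OF "3.prems"(3) sym] .
    have sB: "set B \<subseteq> set ?P2" using B by (metis set_append Un_upper1)
    have sZ: "set Z \<subseteq> set ?P2 \<union> set (rev W)" unfolding Z_def using sB by auto
    have "Z \<noteq> []" unfolding Z_def using rWne by simp
    moreover have "set Z \<subseteq> V" using sZ wP2 wrW unfolding walk_def by blast
    moreover have "\<forall>(a,b)\<in>pairs Z. adj a b" using pZ wP2 wrW unfolding walk_def by blast
    ultimately have wZ: "walk V adj Z" unfolding walk_def by blast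
    have hZ: "hd Z = x2"
    proof (cases B)
      case Nil then show ?thesis using B rW Z_def by auto
    next
      case (Cons b B') then show ?thesis using B Z_def by auto
    qed
    have lZ: "last Z = x" using "3.prems"(4) Wne unfolding Z_def by (simp add: last_rev)
    obtain Z' where Z': "walk V adj Z'" "distinct Z'" "hd Z' = x2" "last Z' = x" "pairs Z' \<subseteq> pairs Z"
      using loop_erase[OF wZ] hZ lZ by auto
    have xx2: "x \<noteq> x2" using "3.prems"(2) by auto
    have Z'ne: "Z' \<noteq> []" using Z'(1) by (simp add: walk_def)
    show False
    proof (cases "3 \<le> length Z'")
      case True
      have "ug_cycle V adj Z'"
        unfolding ug_cycle_alt using True Z' axx2 successively_pairs[of adj Z']
        by (auto simp: walk_def)
      then show False using nocyc by blast
    next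
      case False
      then have "length Z' \<le> 2" by simp
      moreover have "length Z' \<noteq> 1" using Z' xx2 by (cases Z') auto
      moreover have "0 < length Z'" using Z'ne by simp
      ultimately have "length Z' = 2" by linarith
      then obtain c d where "Z' = [c, d]" by (cases Z'; cases "tl Z'") auto
      then have "Z' = [x2, x]" using Z' by simp
      then have "(x2, x) \<in> pairs Z" using Z'(5) by simp
      then have "(x2, x) \<in> pairs ?P2 \<or> (x2, x) \<in> pairs (rev W)" using pZ by simp
      then show False
      proof
        assume "(x2, x) \<in> pairs ?P2"
        then have "x \<in> set ?P2" using pairs_mem by fast
        then show False using "3.prems"(2) by simp
      next
        assume "(x2, x) \<in> pairs (rev W)"
        then have "x2 \<in> set (rev W)" using pairs_mem by fast
        then show False using nx2 by simp
      qed
    qed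
  qed
  then obtain W1 W2 where W: "W = W1 @ x2 # W2" by (meson split_list)
  have pW: "pairs (x2 # W2) \<subseteq> pairs W" unfolding W using pairs_append[of W1 x2 W2] by blast
  have wW': "walk V adj (x2 # W2)" using "3.prems"(3) pW unfolding walk_def W by auto
  have lW': "last (x2 # W2) = last ?P2" using "3.prems"(5) unfolding W by simp
  have "set ?P2 \<subseteq> set (x2 # W2)"
    using "3.IH"(2)[OF wP2 _ wW' _ lW'] "3.prems"(2) by simp
  moreover have "x \<in> set W" using "3.prems"(4) Wne hd_in_set by fastforce
  ultimately show ?case unfolding W by auto
qed

lemma conn_inter:
  assumes nocyc: "\<nexists>cs. ug_cycle V adj cs" and sym: "\<And>u w. adj u w \<Longrightarrow> adj w u"
    and S: "S1 \<subseteq> V" "S2 \<subseteq> V" and c: "ug_connected S1 adj" "ug_connected S2 adj"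
  shows "ug_connected (S1 \<inter> S2) adj"
  unfolding ug_connected_Ered
proof (intro ballI)
  fix u w assume uw: "u \<in> S1 \<inter> S2" "w \<in> S1 \<inter> S2"
  obtain W1 where W1: "walk S1 adj W1" "hd W1 = u" "last W1 = w"
    using rtrancl_walk[of u w S1 adj] c(1) uw unfolding ug_connected_Ered by blast
  obtain P where P: "walk S1 adj P" "distinct P" "hd P = u" "last P = w"
    using loop_erase[OF W1(1)] W1 by auto
  obtain W2 where W2: "walk S2 adj W2" "hd W2 = u" "last W2 = w"
    using rtrancl_walk[of u w S2 adj] c(2) uw unfolding ug_connected_Ered by blast
  have "set P \<subseteq> set W2"
    using path_cover[OF nocyc sym walk_mono[OF P(1) S(1)] P(2) walk_mono[OF W2(1) S(2)]] P W2 by simp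
  then have "walk (S1 \<inter> S2) adj P" using P(1) W2(1) unfolding walk_def by auto
  then show "(u, w) \<in> (Ered (S1 \<inter> S2) adj)\<^sup>*" using walk_rtrancl P by fastforce
qed

lemma connected_lift:
  assumes q: "ug_connected (h ` V) (qadj V adj h)"
    and cls: "\<And>x y. x \<in> V \<Longrightarrow> y \<in> V \<Longrightarrow> h x = h y \<Longrightarrow> (x,y) \<in> (Ered V adj)\<^sup>*"
  shows "ug_connected V adj"
  unfolding ug_connected_Ered
proof (intro ballI)
  fix x y assume xy: "x \<in> V" "y \<in> V"
  have r: "(h x, h y) \<in> (Ered (h ` V) (qadj V adj h))\<^sup>*" using q xy unfolding ug_connected_Ered by blast
  have "\<forall>y'\<in>V. h y' = c \<longrightarrow> (x, y') \<in> (Ered V adj)\<^sup>*" if "(h x, c) \<in> (Ered (h ` V) (qadj V adj h))\<^sup>*" for c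
    using that
  proof (induction rule: rtrancl_induct)
    case base then show ?case using cls xy by auto
  next
    case (step c d)
    from step(2) obtain u w where uw: "u \<in> V" "w \<in> V" "adj u w" "h u = c" "h w = d"
      unfolding Ered_def qadj_def by blast
    have "(x, u) \<in> (Ered V adj)\<^sup>*" using step(3) uw by blast
    moreover have "(u, w) \<in> Ered V adj" using uw unfolding Ered_def by auto
    ultimately have xw: "(x, w) \<in> (Ered V adj)\<^sup>*" by simp
    show ?case
    proof (intro ballI impI)
      fix y' assume "y' \<in> V" "h y' = d"
      then have "(w, y') \<in> (Ered V adj)\<^sup>*" using cls uw(2,5) by metis
      then show "(x, y') \<in> (Ered V adj)\<^sup>*" using xw by (meson rtrancl_trans)
    qed
  qed
  then show "(x, y) \<in> (Ered V adj)\<^sup>*" using r xy by blast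
qed


definition Vof :: "('a \<times> 'b) set \<Rightarrow> ('a + 'b) set" where
  "Vof E = Inl ` fst ` E \<union> Inr ` snd ` E"

lemma bip_adj_sym: "bip_adj E u w \<Longrightarrow> bip_adj E w u"
  by (cases u; cases w) auto

lemma bip_adj_simps[simp]: "\<not> bip_adj E (Inl a) (Inl a')" "\<not> bip_adj E (Inr b) (Inr b')"
  by auto

lemma bip_adj_mono: "E \<subseteq> E' \<Longrightarrow> bip_adj E u w \<Longrightarrow> bip_adj E' u w"
  by (cases u; cases w) auto

lemma Vof_mono: "E \<subseteq> E' \<Longrightarrow> Vof E \<subseteq> Vof E'"
  unfolding Vof_def by auto

lemma Vof_ne: "E \<noteq> {} \<Longrightarrow> Vof E \<noteq> {}"
  unfolding Vof_def by auto

lemma bip_tree_Vof: "bip_tree (fst ` E) (snd ` E) E \<longleftrightarrow> ug_tree (Vof E) (bip_adj E)"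
  unfolding bip_tree_def Vof_def by simp

lemma Inl_Vof: "Inl a \<in> Vof E \<longleftrightarrow> (\<exists>b. (a,b) \<in> E)"
  unfolding Vof_def by force

lemma Inr_Vof: "Inr b \<in> Vof E \<longleftrightarrow> (\<exists>a. (a,b) \<in> E)"
  unfolding Vof_def by force

lemma sub_nocycle:
  assumes "\<nexists>cs. ug_cycle (Vof G) (bip_adj G) cs" "E \<subseteq> G"
  shows "\<nexists>cs. ug_cycle (Vof E) (bip_adj E) cs"
proof
  assume "\<exists>cs. ug_cycle (Vof E) (bip_adj E) cs"
  then obtain cs where c: "ug_cycle (Vof E) (bip_adj E) cs" by blast
  have "set cs \<subseteq> Vof G" using c Vof_mono[OF assms(2)] by (auto simp: ug_cycle_alt)
  then have "ug_cycle (Vof G) (bip_adj G) cs"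
    using ug_cycle_mono[OF c] bip_adj_mono[OF assms(2)] by blast
  then show False using assms(1) by blast
qed

lemma sub_tree:
  assumes "ug_tree (Vof G) (bip_adj G)" "E \<subseteq> G" "E \<noteq> {}" "ug_connected (Vof E) (bip_adj E)"
  shows "ug_tree (Vof E) (bip_adj E)"
  using assms sub_nocycle[of G E] Vof_ne[OF assms(3)] unfolding ug_tree_def by blast

lemma Ered_bip_sym: "(u,w) \<in> (Ered V (bip_adj E))\<^sup>* \<Longrightarrow> (w,u) \<in> (Ered V (bip_adj E))\<^sup>*"
proof -
  assume a: "(u,w) \<in> (Ered V (bip_adj E))\<^sup>*"
  have "sym (Ered V (bip_adj E))" unfolding sym_def Ered_def using bip_adj_sym by blast
  then have "sym ((Ered V (bip_adj E))\<^sup>*)" by (rule sym_rtrancl)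
  then show ?thesis using a by (meson symD)
qed

lemma Vof_Int: "Vof (G \<inter> S) \<subseteq> Vof G"
  unfolding Vof_def by auto

lemma star_connected_L:
  assumes "\<forall>(a',b)\<in>E. a' = a"
  shows "ug_connected (Vof E) (bip_adj E)"
proof -
  have r: "(u, Inl a) \<in> (Ered (Vof E) (bip_adj E))\<^sup>*" if u: "u \<in> Vof E" for u
  proof (cases u)
    case (Inl a')
    then show ?thesis using u assms unfolding Vof_def by auto
  next
    case (Inr b)
    then obtain a' where e: "(a',b) \<in> E" using u Inr_Vof by metis
    then have "a' = a" using assms by auto
    then have "(u, Inl a) \<in> Ered (Vof E) (bip_adj E)" using e Inr unfolding Ered_def Vof_def by force
    then show ?thesis by simp
  qed
  have "(Inl a, u) \<in> (Ered (Vof E) (bip_adj E))\<^sup>*" if "u \<in> Vof E" for u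
  proof -
    have "(u, Inl a) \<in> (Ered (Vof E) (bip_adj E))\<^sup>*" using r that by blast
    then show ?thesis by (rule Ered_bip_sym)
  qed
  then show ?thesis unfolding ug_connected_Ered using r by (meson rtrancl_trans)
qed

lemma star_connected_R:
  assumes "\<forall>(a,b')\<in>E. b' = b"
  shows "ug_connected (Vof E) (bip_adj E)"
proof -
  have r: "(u, Inr b) \<in> (Ered (Vof E) (bip_adj E))\<^sup>*" if u: "u \<in> Vof E" for u
  proof (cases u)
    case (Inr b')
    then show ?thesis using u assms unfolding Vof_def by auto
  next
    case (Inl a)
    then obtain b' where e: "(a,b') \<in> E" using u Inl_Vof by metis
    then have "b' = b" using assms by auto
    then have "(u, Inr b) \<in> Ered (Vof E) (bip_adj E)" using e Inl unfolding Ered_def Vof_def by force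
    then show ?thesis by simp
  qed
  have "(Inr b, u) \<in> (Ered (Vof E) (bip_adj E))\<^sup>*" if "u \<in> Vof E" for u
  proof -
    have "(u, Inr b) \<in> (Ered (Vof E) (bip_adj E))\<^sup>*" using r that by blast
    then show ?thesis by (rule Ered_bip_sym)
  qed
  then show ?thesis unfolding ug_connected_Ered using r by (meson rtrancl_trans)
qed

lemma Ered_cong: "(\<And>x y. x \<in> V \<Longrightarrow> y \<in> V \<Longrightarrow> adj x y = adj' x y) \<Longrightarrow> Ered V adj = Ered V adj'"
  unfolding Ered_def by auto

lemma restr_adj:
  assumes "u \<in> Vof (G \<inter> A \<times> B)" "w \<in> Vof (G \<inter> A \<times> B)"
  shows "bip_adj (G \<inter> A \<times> B) u w = bip_adj G u w"
  using assms unfolding Vof_def by (cases u; cases w) auto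

lemma restr_connected_iff:
  "ug_connected (Vof (G \<inter> A \<times> B)) (bip_adj (G \<inter> A \<times> B)) \<longleftrightarrow>
   ug_connected (Vof (G \<inter> A \<times> B)) (bip_adj G)"
proof -
  have "Ered (Vof (G \<inter> A \<times> B)) (bip_adj (G \<inter> A \<times> B)) = Ered (Vof (G \<inter> A \<times> B)) (bip_adj G)"
    by (rule Ered_cong) (rule restr_adj)
  then show ?thesis by (simp add: ug_connected_Ered)
qed

lemma Vof_restr_inter:
  "Vof (G \<inter> A \<times> UNIV) \<inter> Vof (G \<inter> UNIV \<times> B) = Vof (G \<inter> A \<times> B)"
  unfolding Vof_def by force

lemma restr_conn_inter:
  assumes T: "ug_tree (Vof G) (bip_adj G)"
    and c1: "ug_connected (Vof (G \<inter> A \<times> UNIV)) (bip_adj (G \<inter> A \<times> UNIV))"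
    and c2: "ug_connected (Vof (G \<inter> UNIV \<times> B)) (bip_adj (G \<inter> UNIV \<times> B))"
  shows "ug_connected (Vof (G \<inter> A \<times> B)) (bip_adj (G \<inter> A \<times> B))"
proof -
  have nc: "\<nexists>cs. ug_cycle (Vof G) (bip_adj G) cs" using T unfolding ug_tree_def by blast
  have s1: "Vof (G \<inter> A \<times> UNIV) \<subseteq> Vof G" "Vof (G \<inter> UNIV \<times> B) \<subseteq> Vof G" by (rule Vof_Int)+
  have c1': "ug_connected (Vof (G \<inter> A \<times> UNIV)) (bip_adj G)" using c1 restr_connected_iff by blast
  have c2': "ug_connected (Vof (G \<inter> UNIV \<times> B)) (bip_adj G)" using c2 restr_connected_iff by blast
  have "ug_connected (Vof (G \<inter> A \<times> UNIV) \<inter> Vof (G \<inter> UNIV \<times> B)) (bip_adj G)"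
    by (rule conn_inter[OF nc bip_adj_sym s1 c1' c2'])
  then show ?thesis unfolding Vof_restr_inter restr_connected_iff .
qed

definition qimg :: "('a \<Rightarrow> 'c) \<Rightarrow> ('b \<Rightarrow> 'd) \<Rightarrow> ('a \<times> 'b) set \<Rightarrow> ('c \<times> 'd) set" where
  "qimg f g E = (\<lambda>(a,b). (f a, g b)) ` E"

lemma qimg_Vof: "map_sum f g ` Vof E = Vof (qimg f g E)"
  unfolding Vof_def qimg_def by force

lemma qimg_adj1: "qadj (Vof E) (bip_adj E) (map_sum f g) c d = bip_adj (qimg f g E) c d"
proof
  assume "qadj (Vof E) (bip_adj E) (map_sum f g) c d"
  then obtain u w where uw: "bip_adj E u w" "map_sum f g u = c" "map_sum f g w = d"
    unfolding qadj_def by blast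
  show "bip_adj (qimg f g E) c d"
  proof (cases u)
    case (Inl a)
    then obtain b where "w = Inr b" "(a,b) \<in> E" using uw by (cases w) auto
    then show ?thesis using uw Inl unfolding qimg_def by force
  next
    case (Inr b)
    then obtain a where "w = Inl a" "(a,b) \<in> E" using uw by (cases w) auto
    then show ?thesis using uw Inr unfolding qimg_def by force
  qed
next
  assume a: "bip_adj (qimg f g E) c d"
  show "qadj (Vof E) (bip_adj E) (map_sum f g) c d"
  proof (cases c)
    case (Inl x)
    then obtain y where d: "d = Inr y" "(x,y) \<in> qimg f g E" using a by (cases d) auto
    then obtain p q where pq: "(p,q) \<in> E" "x = f p" "y = g q" unfolding qimg_def by auto
    have u: "Inl p \<in> Vof E" "Inr q \<in> Vof E" using pq(1) by (auto simp: Inl_Vof Inr_Vof)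
    have "bip_adj E (Inl p) (Inr q)" "map_sum f g (Inl p) = c" "map_sum f g (Inr q) = d"
      using pq Inl d by auto
    then show ?thesis unfolding qadj_def using u by blast
  next
    case (Inr y)
    then obtain x where d: "d = Inl x" "(x,y) \<in> qimg f g E" using a by (cases d) auto
    then obtain p q where pq: "(p,q) \<in> E" "x = f p" "y = g q" unfolding qimg_def by auto
    have u: "Inl p \<in> Vof E" "Inr q \<in> Vof E" using pq(1) by (auto simp: Inl_Vof Inr_Vof)
    have "bip_adj E (Inr q) (Inl p)" "map_sum f g (Inr q) = c" "map_sum f g (Inl p) = d"
      using pq Inr d by auto
    then show ?thesis unfolding qadj_def using u by blast
  qed
qed

lemma qimg_adj: "qadj (Vof E) (bip_adj E) (map_sum f g) = bip_adj (qimg f g E)"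
  by (intro ext) (rule qimg_adj1)

lemma class_L:
  assumes sub: "E1 \<subseteq> H" and c: "ug_connected (Vof E1) (bip_adj E1)"
    and k: "\<forall>(a,b)\<in>E1. f a = k"
    and a12: "Inl a1 \<in> Vof E1" "Inl a2 \<in> Vof E1"
  shows "(Inl a1, Inl a2) \<in> (Rcl (Vof H) (bip_adj H) (map_sum f g))\<^sup>*"
proof -
  let ?R = "Rcl (Vof H) (bip_adj H) (map_sum f g)"
  have r: "(Inl a1, Inl a2) \<in> (Ered (Vof E1) (bip_adj E1))\<^sup>*" using c a12 unfolding ug_connected_Ered by blast
  have "case w of Inl a \<Rightarrow> (Inl a1, Inl a) \<in> ?R\<^sup>* | Inr b \<Rightarrow> (\<exists>a. (Inl a1, Inl a) \<in> ?R\<^sup>* \<and> (a,b) \<in> E1)"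
    if "(Inl a1, w) \<in> (Ered (Vof E1) (bip_adj E1))\<^sup>*" for w
    using that
  proof (induction rule: rtrancl_induct)
    case base then show ?case by simp
  next
    case (step y z)
    have e: "y \<in> Vof E1" "z \<in> Vof E1" "bip_adj E1 y z" using step(2) unfolding Ered_def by auto
    show ?case
    proof (cases y)
      case (Inl a)
      then obtain b where z: "z = Inr b" "(a,b) \<in> E1" using e by (cases z) auto
      then show ?thesis using step(3) Inl by auto
    next
      case (Inr b)
      then obtain a' where z: "z = Inl a'" "(a',b) \<in> E1" using e by (cases z) auto
      obtain a where a: "(Inl a1, Inl a) \<in> ?R\<^sup>*" "(a,b) \<in> E1" using step(3) Inr by auto
      have "(Inl a, Inl a') \<in> ?R\<^sup>*"
      proof (cases "a = a'")
        case True then show ?thesis by simp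
      next
        case False
        have "(a,b) \<in> H" "(a',b) \<in> H" using a z sub by auto
        moreover have "f a = f a'" using bspec[OF k a(2)] bspec[OF k z(2)] by simp
        ultimately have "(Inl a, Inl a') \<in> ?R" unfolding Rcl_def using False
          by (auto simp: Vof_def intro!: bexI[of _ "Inr b"]) force+
        then show ?thesis by simp
      qed
      then show ?thesis using a(1) z(1) by simp
    qed
  qed
  from this[OF r] show ?thesis by simp
qed

lemma class_R:
  assumes sub: "E1 \<subseteq> H" and c: "ug_connected (Vof E1) (bip_adj E1)"
    and k: "\<forall>(a,b)\<in>E1. g b = k"
    and b12: "Inr b1 \<in> Vof E1" "Inr b2 \<in> Vof E1"
  shows "(Inr b1, Inr b2) \<in> (Rcl (Vof H) (bip_adj H) (map_sum f g))\<^sup>*"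
proof -
  let ?R = "Rcl (Vof H) (bip_adj H) (map_sum f g)"
  have r: "(Inr b1, Inr b2) \<in> (Ered (Vof E1) (bip_adj E1))\<^sup>*" using c b12 unfolding ug_connected_Ered by blast
  have "case w of Inr b \<Rightarrow> (Inr b1, Inr b) \<in> ?R\<^sup>* | Inl a \<Rightarrow> (\<exists>b. (Inr b1, Inr b) \<in> ?R\<^sup>* \<and> (a,b) \<in> E1)"
    if "(Inr b1, w) \<in> (Ered (Vof E1) (bip_adj E1))\<^sup>*" for w
    using that
  proof (induction rule: rtrancl_induct)
    case base then show ?case by simp
  next
    case (step y z)
    have e: "y \<in> Vof E1" "z \<in> Vof E1" "bip_adj E1 y z" using step(2) unfolding Ered_def by auto
    show ?case
    proof (cases y)
      case (Inr b)
      then obtain a where z: "z = Inl a" "(a,b) \<in> E1" using e by (cases z) auto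
      then show ?thesis using step(3) Inr by auto
    next
      case (Inl a)
      then obtain b' where z: "z = Inr b'" "(a,b') \<in> E1" using e by (cases z) auto
      obtain b where b: "(Inr b1, Inr b) \<in> ?R\<^sup>*" "(a,b) \<in> E1" using step(3) Inl by auto
      have "(Inr b, Inr b') \<in> ?R\<^sup>*"
      proof (cases "b = b'")
        case True then show ?thesis by simp
      next
        case False
        have "(a,b) \<in> H" "(a,b') \<in> H" using b z sub by auto
        moreover have "g b = g b'" using bspec[OF k b(2)] bspec[OF k z(2)] by simp
        ultimately have "(Inr b, Inr b') \<in> ?R" unfolding Rcl_def using False
          by (auto simp: Vof_def intro!: bexI[of _ "Inl a"]) force+
        then show ?thesis by simp
      qed
      then show ?thesis using b(1) z(1) by simp
    qed
  qed
  from this[OF r] show ?thesis by simp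
qed


lemma lcp_prefix1: "prefix (lcp xs ys) xs"
  by (induction xs ys rule: lcp.induct) auto

lemma lcp_prefix2: "prefix (lcp xs ys) ys"
  by (induction xs ys rule: lcp.induct) auto

lemma lcp_max: "prefix t xs \<Longrightarrow> prefix t ys \<Longrightarrow> prefix t (lcp xs ys)"
proof (induction xs ys arbitrary: t rule: lcp.induct)
  case (1 x xs y ys)
  then show ?case by (cases t) auto
qed auto

lemma lcs_suffix1: "suffix (lcs xs ys) xs"
  unfolding lcs_def suffix_to_prefix using lcp_prefix1 by simp

lemma lcs_suffix2: "suffix (lcs xs ys) ys"
  unfolding lcs_def suffix_to_prefix using lcp_prefix2 by simp

lemma lcs_max: "suffix t xs \<Longrightarrow> suffix t ys \<Longrightarrow> suffix t (lcs xs ys)"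
  unfolding lcs_def suffix_to_prefix using lcp_max by simp

lemma suffix_neq_length: "suffix s w \<Longrightarrow> s \<noteq> w \<Longrightarrow> length s < length w"
  unfolding suffix_def by auto

lemma prefix_neq_length: "prefix s w \<Longrightarrow> s \<noteq> w \<Longrightarrow> length s < length w"
  unfolding prefix_def by auto

locale mctx =
  fixes \<sigma> :: "'a \<Rightarrow> 'b list" and l :: 'b
  assumes slp: "strongly_left_proper \<sigma> l" and inj: "inj \<sigma>"
begin

lemma sig_cons: "\<sigma> a = l # tl (\<sigma> a)" and sig_tl: "l \<notin> set (tl (\<sigma> a))"
proof -
  have a: "\<sigma> a \<noteq> []" "hd (\<sigma> a) = l" "count_list (\<sigma> a) l = 1"
    using slp unfolding strongly_left_proper_def by auto
  then show e: "\<sigma> a = l # tl (\<sigma> a)" by (cases "\<sigma> a") auto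
  have "count_list (l # tl (\<sigma> a)) l = 1" using a(3) e by metis
  then have "count_list (tl (\<sigma> a)) l = 0" by simp
  then show "l \<notin> set (tl (\<sigma> a))" by (simp add: count_list_0_iff)
qed

lemma sig_ne: "\<sigma> a \<noteq> []" using sig_cons[of a] by (metis list.distinct(1))

lemma l_in_sig: "l \<in> set (\<sigma> a)" using sig_cons[of a] by (metis list.set_intros(1))

lemma suffix_noL: "suffix s (\<sigma> a) \<Longrightarrow> s \<noteq> \<sigma> a \<Longrightarrow> l \<notin> set s"
proof -
  assume "suffix s (\<sigma> a)" "s \<noteq> \<sigma> a"
  then have "suffix s (tl (\<sigma> a))" using sig_cons[of a] suffix_Cons by metis
  then show ?thesis using sig_tl[of a] set_mono_suffix by blast
qed

lemma noL_neq: "l \<notin> set s \<Longrightarrow> s \<noteq> \<sigma> a"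
  using l_in_sig by auto

lemma noL_suffix_less: "l \<notin> set s \<Longrightarrow> suffix s (\<sigma> a) \<Longrightarrow> length s < length (\<sigma> a)"
  using suffix_neq_length noL_neq by blast

lemma suffix_sig_inj: "suffix (\<sigma> a) (\<sigma> a') \<Longrightarrow> a = a'"
proof -
  assume "suffix (\<sigma> a) (\<sigma> a')"
  then obtain t where t: "\<sigma> a' = t @ \<sigma> a" unfolding suffix_def by blast
  show "a = a'"
  proof (cases "t = []")
    case True then show ?thesis using t inj by (simp add: inj_eq)
  next
    case False
    then have "tl (\<sigma> a') = tl t @ \<sigma> a" using t by simp
    then have "l \<in> set (tl (\<sigma> a'))" using l_in_sig[of a] by simp
    then show ?thesis using sig_tl by blast
  qed
qed

lemma prefix_sigl_inj: "prefix (\<sigma> b @ [l]) (\<sigma> b' @ [l]) \<Longrightarrow> b = b'"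
proof -
  assume "prefix (\<sigma> b @ [l]) (\<sigma> b' @ [l])"
  then obtain t where t: "\<sigma> b' @ [l] = \<sigma> b @ [l] @ t" unfolding prefix_def by auto
  show "b = b'"
  proof (cases "t = []")
    case True then show ?thesis using t inj by (simp add: inj_eq)
  next
    case False
    then obtain t' where t': "t = t' @ [last t]" by (metis append_butlast_last_id)
    have "last (\<sigma> b' @ [l]) = last (\<sigma> b @ [l] @ t)" using t by simp
    then have "last t = l" using False by simp
    then have "\<sigma> b' @ [l] = (\<sigma> b @ l # t') @ [l]" using t t' by simp
    then have e: "\<sigma> b' = \<sigma> b @ l # t'" by simp
    have "tl (\<sigma> b') = tl (\<sigma> b) @ l # t'" using e sig_ne[of b] by simp
    then show ?thesis using sig_tl[of b'] by simp
  qed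
qed

definition good :: "'b list \<Rightarrow> 'b list \<Rightarrow> bool" where
  "good s p \<longleftrightarrow> l \<notin> set s \<and> p \<noteq> [] \<and> hd p = l \<and> l \<notin> set (tl p)"

lemma prefix_good: "prefix p (\<sigma> b) \<Longrightarrow> p \<noteq> [] \<Longrightarrow> hd p = l \<and> l \<notin> set (tl p)"
proof -
  assume a: "prefix p (\<sigma> b)" "p \<noteq> []"
  then obtain p' where p: "p = l # p'" using sig_cons[of b] by (metis Cons_prefix_Cons list.exhaust prefix_Cons)
  then have "prefix p' (tl (\<sigma> b))" using a sig_cons[of b] by (metis Cons_prefix_Cons)
  then show ?thesis using p sig_tl[of b] set_mono_prefix by fastforce
qed

lemma good_prefix_less: "hd p = l \<Longrightarrow> p \<noteq> [] \<Longrightarrow> l \<notin> set (tl p) \<Longrightarrow> prefix p (\<sigma> b @ [l]) \<Longrightarrow>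
  length p < length (\<sigma> b @ [l])"
proof -
  assume a: "hd p = l" "p \<noteq> []" "l \<notin> set (tl p)" "prefix p (\<sigma> b @ [l])"
  have "p \<noteq> \<sigma> b @ [l]"
  proof
    assume "p = \<sigma> b @ [l]"
    then have "tl p = tl (\<sigma> b) @ [l]" using sig_ne[of b] by simp
    then show False using a(3) by simp
  qed
  then show ?thesis using a(4) prefix_neq_length by blast
qed

lemma good_prefix_sig: "good s p \<Longrightarrow> prefix p (\<sigma> b @ [l]) \<Longrightarrow> prefix p (\<sigma> b)"
  unfolding good_def using good_prefix_less[of p b] prefix_snoc by (metis less_irrefl)

definition Gsp :: "('a \<times> 'a) set \<Rightarrow> 'b list \<Rightarrow> 'b list \<Rightarrow> ('a \<times> 'a) set" where
  "Gsp G s p = {(a,b) \<in> G. suffix s (\<sigma> a) \<and> prefix p (\<sigma> b @ [l])}"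

definition Qsp :: "('a \<times> 'a) set \<Rightarrow> 'b list \<Rightarrow> 'b list \<Rightarrow> ('b \<times> 'b) set" where
  "Qsp G s p = {(c,d). \<exists>(a,b)\<in>G. suffix (c # s) (\<sigma> a) \<and> prefix (p @ [d]) (\<sigma> b @ [l])}"

definition fL :: "'b list \<Rightarrow> 'a \<Rightarrow> 'b" where
  "fL s a = \<sigma> a ! (length (\<sigma> a) - Suc (length s))"

definition gR :: "'b list \<Rightarrow> 'a \<Rightarrow> 'b" where
  "gR p b = (\<sigma> b @ [l]) ! length p"

definition valid :: "('a \<times> 'a) set \<Rightarrow> 'b list \<Rightarrow> 'b list \<Rightarrow> bool" where
  "valid G s p \<longleftrightarrow> (\<exists>(a,b)\<in>G. suffix s (\<sigma> a) \<and> s \<noteq> \<sigma> a \<and> prefix p (\<sigma> b) \<and> p \<noteq> [])"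

lemma suffix_cons_iff:
  assumes "suffix s w" "length s < length w"
  shows "suffix (c # s) w \<longleftrightarrow> c = w ! (length w - Suc (length s))"
proof -
  obtain z where w: "w = z @ s" using assms(1) unfolding suffix_def by blast
  then have zne: "z \<noteq> []" using assms(2) by auto
  then obtain z' x where z: "z = z' @ [x]" by (metis append_butlast_last_id)
  have "w ! (length w - Suc (length s)) = x" unfolding w z by (simp add: nth_append)
  moreover have "suffix (c # s) w \<longleftrightarrow> c = x"
    unfolding w z using suffix_appendD by (auto simp: suffix_def)
  ultimately show ?thesis by simp
qed

lemma prefix_snoc_iff:
  assumes "prefix p w" "length p < length w"
  shows "prefix (p @ [d]) w \<longleftrightarrow> d = w ! length p"
proof -
  obtain r where w: "w = p @ r" using assms(1) unfolding prefix_def by blast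
  then obtain x r' where r: "r = x # r'" using assms(2) by (cases r) auto
  show ?thesis unfolding w r by (simp add: nth_append)
qed

lemma good_fL: "good s p \<Longrightarrow> suffix s (\<sigma> a) \<Longrightarrow> suffix (c # s) (\<sigma> a) \<longleftrightarrow> fL s a = c"
  unfolding fL_def good_def using suffix_cons_iff noL_suffix_less by metis

lemma good_gR: "good s p \<Longrightarrow> prefix p (\<sigma> b @ [l]) \<Longrightarrow> prefix (p @ [d]) (\<sigma> b @ [l]) \<longleftrightarrow> gR p b = d"
  unfolding gR_def good_def using prefix_snoc_iff good_prefix_less by metis

lemma Qsp_qimg: "good s p \<Longrightarrow> Qsp G s p = qimg (fL s) (gR p) (Gsp G s p)"
proof -
  assume g: "good s p"
  show ?thesis
  proof (intro set_eqI iffI)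
    fix x assume "x \<in> Qsp G s p"
    then obtain c d a b where x: "x = (c,d)" "(a,b) \<in> G" "suffix (c # s) (\<sigma> a)" "prefix (p @ [d]) (\<sigma> b @ [l])"
      unfolding Qsp_def by blast
    have s: "suffix s (\<sigma> a)" "prefix p (\<sigma> b @ [l])"
      using suffix_ConsD[OF x(3)] append_prefixD[OF x(4)] by auto
    then have "fL s a = c" "gR p b = d" using x good_fL[OF g] good_gR[OF g] by blast+
    moreover have "(a,b) \<in> Gsp G s p" using x s unfolding Gsp_def by simp
    ultimately show "x \<in> qimg (fL s) (gR p) (Gsp G s p)" unfolding qimg_def x by force
  next
    fix x assume "x \<in> qimg (fL s) (gR p) (Gsp G s p)"
    then obtain a b where x: "x = (fL s a, gR p b)" "(a,b) \<in> G" "suffix s (\<sigma> a)" "prefix p (\<sigma> b @ [l])"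
      unfolding qimg_def Gsp_def by auto
    then show "x \<in> Qsp G s p" unfolding Qsp_def using good_fL[OF g] good_gR[OF g] by blast
  qed
qed

lemma Gsp_restr: "Gsp G s p = G \<inter> {a. suffix s (\<sigma> a)} \<times> {b. prefix p (\<sigma> b @ [l])}"
  unfolding Gsp_def by auto

lemma Gsp_restrL: "Gsp G s [] = G \<inter> {a. suffix s (\<sigma> a)} \<times> UNIV"
  unfolding Gsp_def by auto

lemma Gsp_restrR: "Gsp G [] p = G \<inter> UNIV \<times> {b. prefix p (\<sigma> b @ [l])}"
  unfolding Gsp_def by auto

lemma Gsp_sub: "Gsp G s p \<subseteq> G" unfolding Gsp_def by auto

lemma Gsp_consL:
  assumes g: "good s p" shows "Gsp G (c # s) p = {(a,b) \<in> Gsp G s p. fL s a = c}"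
proof (intro set_eqI)
  fix x :: "'a \<times> 'a"
  obtain a b where x: "x = (a,b)" by fastforce
  have "suffix (c # s) (\<sigma> a) \<longleftrightarrow> suffix s (\<sigma> a) \<and> fL s a = c"
  proof
    assume h: "suffix (c # s) (\<sigma> a)"
    have s1: "suffix s (\<sigma> a)" using suffix_ConsD[OF h] .
    show "suffix s (\<sigma> a) \<and> fL s a = c" using s1 h good_fL[OF g s1] by simp
  next
    assume h: "suffix s (\<sigma> a) \<and> fL s a = c"
    show "suffix (c # s) (\<sigma> a)" using good_fL[OF g conjunct1[OF h]] conjunct2[OF h] by simp
  qed
  then show "x \<in> Gsp G (c # s) p \<longleftrightarrow> x \<in> {(a,b) \<in> Gsp G s p. fL s a = c}"
    unfolding x Gsp_def by auto
qed

lemma Gsp_snocR: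
  assumes g: "good s p" shows "Gsp G s (p @ [d]) = {(a,b) \<in> Gsp G s p. gR p b = d}"
proof (intro set_eqI)
  fix x :: "'a \<times> 'a"
  obtain a b where x: "x = (a,b)" by fastforce
  have "prefix (p @ [d]) (\<sigma> b @ [l]) \<longleftrightarrow> prefix p (\<sigma> b @ [l]) \<and> gR p b = d"
  proof
    assume h: "prefix (p @ [d]) (\<sigma> b @ [l])"
    have s1: "prefix p (\<sigma> b @ [l])" using append_prefixD[OF h] .
    show "prefix p (\<sigma> b @ [l]) \<and> gR p b = d" using s1 h good_gR[OF g s1] by simp
  next
    assume h: "prefix p (\<sigma> b @ [l]) \<and> gR p b = d"
    show "prefix (p @ [d]) (\<sigma> b @ [l])" using good_gR[OF g conjunct1[OF h]] conjunct2[OF h] by simp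
  qed
  then show "x \<in> Gsp G s (p @ [d]) \<longleftrightarrow> x \<in> {(a,b) \<in> Gsp G s p. gR p b = d}"
    unfolding x Gsp_def by auto
qed

lemma valid_good: "valid G s p \<Longrightarrow> good s p"
  unfolding valid_def good_def using suffix_noL prefix_good by blast

lemma valid_Gsp: "valid G s p \<Longrightarrow> Gsp G s p \<noteq> {}"
  unfolding valid_def Gsp_def by (auto intro: prefix_prefix)

end


lemma card2: "finite S \<Longrightarrow> x \<in> S \<Longrightarrow> y \<in> S \<Longrightarrow> x \<noteq> y \<Longrightarrow> 2 \<le> card S"
proof -
  assume a: "finite S" "x \<in> S" "y \<in> S" "x \<noteq> y"
  have "card {x, y} \<le> card S" using a by (intro card_mono) auto
  then show ?thesis using a(4) by simp
qed

lemma finite_Vof: "finite E \<Longrightarrow> finite (Vof E)"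
  unfolding Vof_def by simp

lemma fst_qimg: "fst ` qimg f g E = f ` fst ` E" unfolding qimg_def by force
lemma snd_qimg: "snd ` qimg f g E = g ` snd ` E" unfolding qimg_def by force

context mctx begin

lemma conn_all:
  assumes T: "ug_tree (Vof G) (bip_adj G)"
    and HT: "\<And>s. Gsp G s [] \<noteq> {} \<Longrightarrow> ug_connected (Vof (Gsp G s [])) (bip_adj (Gsp G s []))"
    and HU: "\<And>p. Gsp G [] p \<noteq> {} \<Longrightarrow> ug_connected (Vof (Gsp G [] p)) (bip_adj (Gsp G [] p))"
    and ne: "Gsp G s p \<noteq> {}"
  shows "ug_connected (Vof (Gsp G s p)) (bip_adj (Gsp G s p))"
proof -
  have n: "Gsp G s [] \<noteq> {}" "Gsp G [] p \<noteq> {}" using ne unfolding Gsp_def by auto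
  have c1: "ug_connected (Vof (G \<inter> {a. suffix s (\<sigma> a)} \<times> UNIV)) (bip_adj (G \<inter> {a. suffix s (\<sigma> a)} \<times> UNIV))"
    using HT[OF n(1)] unfolding Gsp_restrL .
  have c2: "ug_connected (Vof (G \<inter> UNIV \<times> {b. prefix p (\<sigma> b @ [l])})) (bip_adj (G \<inter> UNIV \<times> {b. prefix p (\<sigma> b @ [l])}))"
    using HU[OF n(2)] unfolding Gsp_restrR .
  show ?thesis unfolding Gsp_restr by (rule restr_conn_inter[OF T c1 c2])
qed

lemma comb_back:
  assumes T: "ug_tree (Vof G) (bip_adj G)" and fin: "finite G"
    and HT: "\<And>s. Gsp G s [] \<noteq> {} \<Longrightarrow> ug_connected (Vof (Gsp G s [])) (bip_adj (Gsp G s []))"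
    and HU: "\<And>p. Gsp G [] p \<noteq> {} \<Longrightarrow> ug_connected (Vof (Gsp G [] p)) (bip_adj (Gsp G [] p))"
    and g: "good s p" and ne: "Gsp G s p \<noteq> {}"
  shows "ug_tree (Vof (Qsp G s p)) (bip_adj (Qsp G s p))"
proof -
  let ?H = "Gsp G s p"
  let ?h = "map_sum (fL s) (gR p)"
  have Htree: "ug_tree (Vof ?H) (bip_adj ?H)"
    by (rule sub_tree[OF T Gsp_sub ne conn_all[OF T HT HU ne]])
  have finV: "finite (Vof ?H)" using fin Gsp_sub finite_subset finite_Vof by metis
  have resp: "?h u \<noteq> ?h w" if "u \<in> Vof ?H" "w \<in> Vof ?H" "bip_adj ?H u w" for u w
    using that by (cases u; cases w) auto
  have cls: "(u,w) \<in> (Rcl (Vof ?H) (bip_adj ?H) ?h)\<^sup>*"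
    if uw: "u \<in> Vof ?H" "w \<in> Vof ?H" "?h u = ?h w" for u w
  proof (cases u)
    case (Inl a1)
    then obtain a2 where w: "w = Inl a2" using uw(3) by (cases w) auto
    define c where "c = fL s a1"
    have eq: "fL s a2 = c" using uw(3) Inl w c_def by simp
    define E1 where "E1 = Gsp G (c # s) p"
    have E1: "E1 = {(a,b) \<in> ?H. fL s a = c}" unfolding E1_def by (rule Gsp_consL[OF g])
    obtain b1 where ab1: "(a1,b1) \<in> ?H" using uw(1) Inl Inl_Vof by metis
    then have ab1': "(a1,b1) \<in> E1" using E1 c_def by simp
    then have E1ne: "E1 \<noteq> {}" by blast
    have sub: "E1 \<subseteq> ?H" using E1 by blast
    have k: "\<forall>(a,b)\<in>E1. fL s a = c" using E1 by blast
    have a1: "Inl a1 \<in> Vof E1" using ab1' Inl_Vof by metis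
    obtain b2 where "(a2,b2) \<in> ?H" using uw(2) w Inl_Vof by metis
    then have "(a2,b2) \<in> E1" using E1 eq by simp
    then have a2: "Inl a2 \<in> Vof E1" using Inl_Vof by metis
    have cE1: "ug_connected (Vof E1) (bip_adj E1)" unfolding E1_def
      by (rule conn_all[OF T HT HU E1ne[unfolded E1_def]])
    show ?thesis using class_L[OF sub cE1 k a1 a2, of "gR p"] Inl w by simp
  next
    case (Inr b1)
    then obtain b2 where w: "w = Inr b2" using uw(3) by (cases w) auto
    define d where "d = gR p b1"
    have eq: "gR p b2 = d" using uw(3) Inr w d_def by simp
    define E1 where "E1 = Gsp G s (p @ [d])"
    have E1: "E1 = {(a,b) \<in> ?H. gR p b = d}" unfolding E1_def by (rule Gsp_snocR[OF g])
    obtain a1 where ab1: "(a1,b1) \<in> ?H" using uw(1) Inr Inr_Vof by metis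
    then have ab1': "(a1,b1) \<in> E1" using E1 d_def by simp
    then have E1ne: "E1 \<noteq> {}" by blast
    have sub: "E1 \<subseteq> ?H" using E1 by blast
    have k: "\<forall>(a,b)\<in>E1. gR p b = d" using E1 by blast
    have b1: "Inr b1 \<in> Vof E1" using ab1' Inr_Vof by metis
    obtain a2 where "(a2,b2) \<in> ?H" using uw(2) w Inr_Vof by metis
    then have "(a2,b2) \<in> E1" using E1 eq by simp
    then have b2: "Inr b2 \<in> Vof E1" using Inr_Vof by metis
    have cE1: "ug_connected (Vof E1) (bip_adj E1)" unfolding E1_def
      by (rule conn_all[OF T HT HU E1ne[unfolded E1_def]])
    show ?thesis using class_R[OF sub cE1 k b1 b2, of "fL s"] Inr w by simp
  qed
  have "ug_tree (?h ` Vof ?H) (qadj (Vof ?H) (bip_adj ?H) ?h)"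
    by (rule quot_tree[OF finV Htree bip_adj_sym resp cls]) auto
  then show ?thesis unfolding qimg_Vof qimg_adj Qsp_qimg[OF g] .
qed

end


context mctx begin

lemma valid_len:
  assumes "valid G s p" "\<And>a b. (a,b) \<in> G \<Longrightarrow> length (\<sigma> a) \<le> K \<and> length (\<sigma> b) \<le> K"
  shows "length s < K \<and> length p \<le> K"
proof -
  obtain a b where e: "(a,b) \<in> G" "suffix s (\<sigma> a)" "s \<noteq> \<sigma> a" "prefix p (\<sigma> b)"
    using assms(1) unfolding valid_def by blast
  have "length s < length (\<sigma> a)" using e suffix_neq_length by blast
  moreover have "length p \<le> length (\<sigma> b)" using e prefix_length_le by blast
  ultimately show ?thesis using assms(2)[OF e(1)] by linarith
qed

lemma classL_valid:
  assumes g: "good s p" and a1: "(a1,b1) \<in> Gsp G s p" and a2: "(a2,b2) \<in> Gsp G s p"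
    and ne: "a1 \<noteq> a2" and eq: "fL s a1 = fL s a2"
  shows "valid G (fL s a1 # s) p"
proof -
  have h1: "(a1,b1) \<in> G" "suffix s (\<sigma> a1)" "prefix p (\<sigma> b1 @ [l])" using a1 unfolding Gsp_def by auto
  have h2: "suffix s (\<sigma> a2)" using a2 unfolding Gsp_def by auto
  have s1: "suffix (fL s a1 # s) (\<sigma> a1)" using good_fL[OF g h1(2)] by simp
  have s2: "suffix (fL s a1 # s) (\<sigma> a2)" using good_fL[OF g h2] eq by simp
  have n1: "fL s a1 # s \<noteq> \<sigma> a1"
  proof
    assume "fL s a1 # s = \<sigma> a1"
    then have "suffix (\<sigma> a1) (\<sigma> a2)" using s2 by simp
    then show False using suffix_sig_inj ne by blast
  qed
  have "prefix p (\<sigma> b1)" using good_prefix_sig[OF g h1(3)] .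
  moreover have "p \<noteq> []" using g unfolding good_def by simp
  ultimately show ?thesis unfolding valid_def using h1(1) s1 n1 by blast
qed

lemma classR_valid:
  assumes g: "good s p" and a1: "(a1,b1) \<in> Gsp G s p" and a2: "(a2,b2) \<in> Gsp G s p"
    and ne: "b1 \<noteq> b2" and eq: "gR p b1 = gR p b2"
  shows "valid G s (p @ [gR p b1])"
proof -
  have h1: "(a1,b1) \<in> G" "suffix s (\<sigma> a1)" "prefix p (\<sigma> b1 @ [l])" using a1 unfolding Gsp_def by auto
  have h2: "prefix p (\<sigma> b2 @ [l])" using a2 unfolding Gsp_def by auto
  have p1: "prefix (p @ [gR p b1]) (\<sigma> b1 @ [l])" using good_gR[OF g h1(3)] by simp
  have p2: "prefix (p @ [gR p b1]) (\<sigma> b2 @ [l])" using good_gR[OF g h2] eq by simp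
  have n1: "p @ [gR p b1] \<noteq> \<sigma> b1 @ [l]"
  proof
    assume e: "p @ [gR p b1] = \<sigma> b1 @ [l]"
    have "prefix (\<sigma> b1 @ [l]) (\<sigma> b2 @ [l])" using p2 unfolding e .
    then show False using prefix_sigl_inj ne by blast
  qed
  have "prefix (p @ [gR p b1]) (\<sigma> b1)" using p1 n1 prefix_snoc by metis
  moreover have "s \<noteq> \<sigma> a1" using g noL_neq unfolding good_def by blast
  ultimately show ?thesis unfolding valid_def using h1(1,2) by blast
qed

lemma comb_fwd:
  assumes T: "ug_tree (Vof G) (bip_adj G)" and fin: "finite G"
    and DP: "\<And>s p. valid G s p \<Longrightarrow> 2 \<le> card (fst ` Qsp G s p) \<Longrightarrow> 2 \<le> card (snd ` Qsp G s p) \<Longrightarrow>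
      ug_tree (Vof (Qsp G s p)) (bip_adj (Qsp G s p))"
    and v: "valid G s p"
  shows "ug_connected (Vof (Gsp G s p)) (bip_adj (Gsp G s p))"
proof -
  define K where "K = Max ((\<lambda>a. length (\<sigma> a)) ` (fst ` G \<union> snd ` G))"
  have Kb: "length (\<sigma> a) \<le> K \<and> length (\<sigma> b) \<le> K" if "(a,b) \<in> G" for a b
    unfolding K_def using fin that by (intro conjI Max_ge) force+
  show ?thesis using v
  proof (induction "2 * K - (length s + length p)" arbitrary: s p rule: less_induct)
    case less
    let ?H = "Gsp G s p"
    have g: "good s p" using valid_good[OF less.prems] .
    have Hne: "?H \<noteq> {}" using valid_Gsp[OF less.prems] .
    have finH: "finite ?H" using fin Gsp_sub finite_subset by metis
    have lens: "length s < K" "length p \<le> K" using valid_len[OF less.prems Kb] by auto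
    have IH: "ug_connected (Vof (Gsp G s' p')) (bip_adj (Gsp G s' p'))"
      if "valid G s' p'" "length s + length p < length s' + length p'" for s' p'
    proof -
      have "length s' < K" "length p' \<le> K" using valid_len[OF that(1) Kb] by auto
      then have "2 * K - (length s' + length p') < 2 * K - (length s + length p)" using that(2) by linarith
      then show ?thesis using less.hyps that(1) by blast
    qed
    obtain a0 b0 where ab0: "(a0,b0) \<in> ?H" using Hne by auto
    show ?case
    proof (cases "\<forall>(a,b)\<in>?H. a = a0")
      case True then show ?thesis by (rule star_connected_L)
    next
      case nL: False
      show ?thesis
      proof (cases "\<forall>(a,b)\<in>?H. b = b0")
        case True then show ?thesis by (rule star_connected_R)
      next
        case nR: False
        obtain a1 b1' where ab1: "(a1,b1') \<in> ?H" "a1 \<noteq> a0" using nL by auto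
        obtain a1' b1 where ab1'': "(a1',b1) \<in> ?H" "b1 \<noteq> b0" using nR by auto
        let ?Q = "Qsp G s p"
        have Qeq: "?Q = qimg (fL s) (gR p) ?H" by (rule Qsp_qimg[OF g])
        have fQ: "fst ` ?Q = fL s ` fst ` ?H" unfolding Qeq fst_qimg ..
        have sQ: "snd ` ?Q = gR p ` snd ` ?H" unfolding Qeq snd_qimg ..
        have finQ: "finite (fst ` ?Q)" "finite (snd ` ?Q)" unfolding fQ sQ using finH by auto
        show ?thesis
        proof (cases "2 \<le> card (fst ` ?Q) \<and> 2 \<le> card (snd ` ?Q)")
          case True
          have Qt: "ug_tree (Vof ?Q) (bip_adj ?Q)" using DP[OF less.prems] True by blast
          have Qc: "ug_connected (map_sum (fL s) (gR p) ` Vof ?H) (qadj (Vof ?H) (bip_adj ?H) (map_sum (fL s) (gR p)))"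
            using Qt unfolding qimg_Vof qimg_adj Qeq ug_tree_def by blast
          have cls: "(x, y) \<in> (Ered (Vof ?H) (bip_adj ?H))\<^sup>*"
            if xy: "x \<in> Vof ?H" "y \<in> Vof ?H" "map_sum (fL s) (gR p) x = map_sum (fL s) (gR p) y" for x y
          proof (cases "x = y")
            case True then show ?thesis by simp
          next
            case neq: False
            show ?thesis
            proof (cases x)
              case (Inl a1)
              then obtain a2 where y: "y = Inl a2" using xy(3) by (cases y) auto
              have eq: "fL s a1 = fL s a2" using xy(3) Inl y by simp
              obtain c1 where e1: "(a1,c1) \<in> ?H" using xy(1) Inl Inl_Vof by metis
              obtain c2 where e2: "(a2,c2) \<in> ?H" using xy(2) y Inl_Vof by metis
              have ne: "a1 \<noteq> a2" using neq Inl y by simp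
              define E1 where "E1 = Gsp G (fL s a1 # s) p"
              have E1: "E1 = {(a,b) \<in> ?H. fL s a = fL s a1}" unfolding E1_def by (rule Gsp_consL[OF g])
              have cE1: "ug_connected (Vof E1) (bip_adj E1)" unfolding E1_def
                by (rule IH[OF classL_valid[OF g e1 e2 ne eq]]) simp
              have i1: "Inl a1 \<in> Vof E1" "Inl a2 \<in> Vof E1" using e1 e2 eq E1 Inl_Vof by fastforce+
              have r: "(Inl a1, Inl a2) \<in> (Ered (Vof E1) (bip_adj E1))\<^sup>*"
                using cE1 i1 unfolding ug_connected_Ered by blast
              have sub: "E1 \<subseteq> ?H" using E1 by blast
              have "(Inl a1, Inl a2) \<in> (Ered (Vof ?H) (bip_adj ?H))\<^sup>*"
                by (rule rtrancl_Ered_mono[OF r Vof_mono[OF sub]]) (use bip_adj_mono[OF sub] in blast)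
              then show ?thesis using Inl y by simp
            next
              case (Inr b1)
              then obtain b2 where y: "y = Inr b2" using xy(3) by (cases y) auto
              have eq: "gR p b1 = gR p b2" using xy(3) Inr y by simp
              obtain c1 where e1: "(c1,b1) \<in> ?H" using xy(1) Inr Inr_Vof by metis
              obtain c2 where e2: "(c2,b2) \<in> ?H" using xy(2) y Inr_Vof by metis
              have ne: "b1 \<noteq> b2" using neq Inr y by simp
              define E1 where "E1 = Gsp G s (p @ [gR p b1])"
              have E1: "E1 = {(a,b) \<in> ?H. gR p b = gR p b1}" unfolding E1_def by (rule Gsp_snocR[OF g])
              have cE1: "ug_connected (Vof E1) (bip_adj E1)" unfolding E1_def
                by (rule IH[OF classR_valid[OF g e1 e2 ne eq]]) simp
              have i1: "Inr b1 \<in> Vof E1" "Inr b2 \<in> Vof E1" using e1 e2 eq E1 Inr_Vof by fastforce+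
              have r: "(Inr b1, Inr b2) \<in> (Ered (Vof E1) (bip_adj E1))\<^sup>*"
                using cE1 i1 unfolding ug_connected_Ered by blast
              have sub: "E1 \<subseteq> ?H" using E1 by blast
              have "(Inr b1, Inr b2) \<in> (Ered (Vof ?H) (bip_adj ?H))\<^sup>*"
                by (rule rtrancl_Ered_mono[OF r Vof_mono[OF sub]]) (use bip_adj_mono[OF sub] in blast)
              then show ?thesis using Inr y by simp
            qed
          qed
          show ?thesis by (rule connected_lift[OF Qc cls])
        next
          case False
          then have "\<not> 2 \<le> card (fst ` ?Q) \<or> \<not> 2 \<le> card (snd ` ?Q)" by simp
          then show ?thesis
          proof
            assume c: "\<not> 2 \<le> card (fst ` ?Q)"
            have all: "fL s a = fL s a0" if "a \<in> fst ` ?H" for a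
            proof (rule ccontr)
              assume "fL s a \<noteq> fL s a0"
              moreover have "fL s a \<in> fst ` ?Q" "fL s a0 \<in> fst ` ?Q" unfolding fQ using that ab0 by force+
              ultimately have "2 \<le> card (fst ` ?Q)" using card2 finQ(1) by metis
              then show False using c by simp
            qed
            have eqa: "fL s a0 = fL s a1" using all ab1 by force
            have HE: "?H = Gsp G (fL s a0 # s) p" using Gsp_consL[OF g] all by force
            have "valid G (fL s a0 # s) p" using classL_valid[OF g ab0 ab1(1) ab1(2)[symmetric] eqa] .
            then show ?thesis unfolding HE by (rule IH) simp
          next
            assume c: "\<not> 2 \<le> card (snd ` ?Q)"
            have all: "gR p b = gR p b0" if "b \<in> snd ` ?H" for b
            proof (rule ccontr)
              assume "gR p b \<noteq> gR p b0"
              moreover have "gR p b \<in> snd ` ?Q" "gR p b0 \<in> snd ` ?Q" unfolding sQ using that ab0 by force+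
              ultimately have "2 \<le> card (snd ` ?Q)" using card2 finQ(2) by metis
              then show False using c by simp
            qed
            have eqb: "gR p b0 = gR p b1" using all ab1'' by force
            have HE: "?H = Gsp G s (p @ [gR p b0])" using Gsp_snocR[OF g] all by force
            have "valid G s (p @ [gR p b0])" using classR_valid[OF g ab0 ab1''(1) ab1''(2)[symmetric] eqb] .
            then show ?thesis unfolding HE by (rule IH) simp
          qed
        qed
      qed
    qed
  qed
qed

end


lemma occurs_at_append:
  "occurs_at (A @ B) y p \<longleftrightarrow> occurs_at A y p \<and> occurs_at B y (p + int (length A))"
proof
  assume h: "occurs_at (A @ B) y p"
  have 1: "occurs_at A y p" unfolding occurs_at_def
  proof (intro allI impI)
    fix k assume "k < length A"
    then show "y (p + int k) = A ! k" using h unfolding occurs_at_def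
      by (metis length_append nth_append trans_less_add1)
  qed
  have 2: "occurs_at B y (p + int (length A))" unfolding occurs_at_def
  proof (intro allI impI)
    fix k assume k: "k < length B"
    have kk: "length A + k < length (A @ B)" using k by simp
    have h1: "y (p + int (length A + k)) = (A @ B) ! (length A + k)" using h kk unfolding occurs_at_def by blast
    have e: "p + int (length A) + int k = p + int (length A + k)" by simp
    show "y (p + int (length A) + int k) = B ! k" unfolding e h1 by (rule nth_append_length_plus)
  qed
  show "occurs_at A y p \<and> occurs_at B y (p + int (length A))" using 1 2 by simp
next
  assume h: "occurs_at A y p \<and> occurs_at B y (p + int (length A))"
  show "occurs_at (A @ B) y p" unfolding occurs_at_def
  proof (intro allI impI)
    fix k assume k: "k < length (A @ B)"
    show "y (p + int k) = (A @ B) ! k"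
    proof (cases "k < length A")
      case True then show ?thesis using h unfolding occurs_at_def by (simp add: nth_append)
    next
      case False
      then obtain k' where k': "k = length A + k'" by (metis le_iff_add not_less)
      then have "k' < length B" using k by simp
      then have "y (p + int (length A) + int k') = B ! k'" using h unfolding occurs_at_def by blast
      then show ?thesis using k' by (simp add: nth_append add.assoc)
    qed
  qed
qed

lemma occurs_at_Cons: "occurs_at (a # w) y p \<longleftrightarrow> y p = a \<and> occurs_at w y (p + 1)"
  using occurs_at_append[of "[a]" w y p] by (simp add: occurs_at_def)

lemma occurs_at_Nil[simp]: "occurs_at [] y p"
  by (simp add: occurs_at_def)

lemma occurs_at_nth: "occurs_at w y p \<Longrightarrow> k < length w \<Longrightarrow> y (p + int k) = w ! k"
  unfolding occurs_at_def by blast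

lemma img_pos_0[simp]: "img_pos \<sigma> x 0 = 0"
  by (simp add: img_pos_def)

lemma img_pos_step: "img_pos \<sigma> x (i + 1) = img_pos \<sigma> x i + int (length (\<sigma> (x i)))"
proof (cases "i \<ge> 0")
  case True
  have n: "nat (i + 1) = Suc (nat i)" using True by simp
  show ?thesis unfolding img_pos_def using True n by simp
next
  case False
  define n where "n = nat (- i)"
  have n1: "n \<ge> 1" "i = - int n" using False n_def by auto
  define f where "f = (\<lambda>j::nat. length (\<sigma> (x (- int j))))"
  have ip: "img_pos \<sigma> x i = - int (sum f {1..n})" unfolding img_pos_def f_def n_def using False by simp
  have ip1: "img_pos \<sigma> x (i + 1) = - int (sum f {1..n - 1})"
  proof (cases "i + 1 \<ge> 0")
    case True
    then have i0: "i + 1 = 0" using n1 by simp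
    have "n - 1 = 0" using True n1 by simp
    then show ?thesis unfolding i0 by simp
  next
    case False
    have "nat (- (i + 1)) = n - 1" using n1 by simp
    then show ?thesis unfolding img_pos_def f_def using False by simp
  qed
  obtain m where m: "n = Suc m" using n1(1) by (cases n) auto
  have "sum f {1..n} = sum f {1..n - 1} + f n" unfolding m by simp
  moreover have "f n = length (\<sigma> (x i))" unfolding f_def using n1 by simp
  ultimately show ?thesis using ip ip1 by simp
qed

context
  fixes \<sigma> :: "'a \<Rightarrow> 'b list"
  assumes ne: "\<And>a. \<sigma> a \<noteq> []"
begin

lemma img_pos_ge: "img_pos \<sigma> x i + int k \<le> img_pos \<sigma> x (i + int k)"
proof (induction k)
  case 0 then show ?case by simp
next
  case (Suc k)
  have e: "i + int (Suc k) = (i + int k) + 1" by simp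
  have "img_pos \<sigma> x (i + int (Suc k)) = img_pos \<sigma> x (i + int k) + int (length (\<sigma> (x (i + int k))))"
    unfolding e by (rule img_pos_step)
  moreover have "length (\<sigma> (x (i + int k))) \<ge> 1" using ne by (simp add: Suc_leI)
  ultimately show ?case using Suc by simp
qed

lemma img_pos_mono: "i \<le> j \<Longrightarrow> img_pos \<sigma> x i \<le> img_pos \<sigma> x j"
proof -
  assume "i \<le> j"
  then have e: "i + int (nat (j - i)) = j" by simp
  have "img_pos \<sigma> x i + int (nat (j - i)) \<le> img_pos \<sigma> x j" using img_pos_ge[of x i "nat (j - i)"] unfolding e .
  then show ?thesis by linarith
qed

lemma img_pos_strict: "i < j \<Longrightarrow> img_pos \<sigma> x (i + 1) \<le> img_pos \<sigma> x j"
  using img_pos_mono by simp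

lemma img_pos_less: "img_pos \<sigma> x i < img_pos \<sigma> x (i + 1)"
  using img_pos_step[of \<sigma> x i] ne[of "x i"] by simp

lemma block_ex: "\<exists>j. img_pos \<sigma> x j \<le> n \<and> n < img_pos \<sigma> x (j + 1)"
proof -
  define j0 where "j0 = min n 0"
  have j0: "img_pos \<sigma> x j0 \<le> n"
  proof (cases "n \<ge> 0")
    case True then show ?thesis unfolding j0_def by simp
  next
    case False
    have "img_pos \<sigma> x n + int (nat (- n)) \<le> img_pos \<sigma> x (n + int (nat (- n)))" by (rule img_pos_ge)
    then show ?thesis unfolding j0_def using False by simp
  qed
  define S where "S = {k::nat. img_pos \<sigma> x (j0 + int k) \<le> n}"
  have Sb: "S \<subseteq> {..nat (n - img_pos \<sigma> x j0)}"
  proof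
    fix k assume "k \<in> S"
    then have "img_pos \<sigma> x (j0 + int k) \<le> n" unfolding S_def by simp
    moreover have "img_pos \<sigma> x j0 + int k \<le> img_pos \<sigma> x (j0 + int k)" by (rule img_pos_ge)
    ultimately show "k \<in> {..nat (n - img_pos \<sigma> x j0)}" by simp
  qed
  have finS: "finite S" using Sb finite_subset by blast
  have "0 \<in> S" unfolding S_def using j0 by simp
  define K where "K = Max S"
  have KS: "K \<in> S" unfolding K_def using finS \<open>0 \<in> S\<close> by (intro Max_in) auto
  have "Suc K \<notin> S"
  proof
    assume "Suc K \<in> S"
    then have "Suc K \<le> K" unfolding K_def using Max_ge[OF finS] by blast
    then show False by simp
  qed
  moreover have e: "j0 + int (Suc K) = j0 + int K + 1" by simp
  ultimately have "n < img_pos \<sigma> x (j0 + int K + 1)" unfolding S_def by (simp only: mem_Collect_eq e)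
  moreover have "img_pos \<sigma> x (j0 + int K) \<le> n" using KS unfolding S_def by simp
  ultimately show ?thesis by blast
qed

lemma block_unique:
  assumes "img_pos \<sigma> x j \<le> n" "n < img_pos \<sigma> x (j + 1)"
    "img_pos \<sigma> x i \<le> n" "n < img_pos \<sigma> x (i + 1)"
  shows "i = j"
proof (rule ccontr)
  assume "i \<noteq> j"
  then have "i < j \<or> j < i" by linarith
  then show False
    using img_pos_strict[of i j x] img_pos_strict[of j i x] assms by fastforce
qed

definition img_seq :: "(int \<Rightarrow> 'a) \<Rightarrow> int \<Rightarrow> 'b" where
  "img_seq x n = (let j = SOME j. img_pos \<sigma> x j \<le> n \<and> n < img_pos \<sigma> x (j + 1)
     in \<sigma> (x j) ! nat (n - img_pos \<sigma> x j))"

lemma img_seq_is: "is_image_seq \<sigma> x (img_seq x)"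
  unfolding is_image_seq_def
proof (intro allI impI)
  fix i k assume k: "k < length (\<sigma> (x i))"
  define n where "n = img_pos \<sigma> x i + int k"
  define j where "j = (SOME j. img_pos \<sigma> x j \<le> n \<and> n < img_pos \<sigma> x (j + 1))"
  have jp: "img_pos \<sigma> x j \<le> n \<and> n < img_pos \<sigma> x (j + 1)"
    unfolding j_def using block_ex[of x n] by (rule someI_ex)
  have ip: "img_pos \<sigma> x i \<le> n" "n < img_pos \<sigma> x (i + 1)"
    unfolding n_def using k img_pos_step[of \<sigma> x i] by auto
  have "i = j" using block_unique jp ip by blast
  then show "img_seq x (img_pos \<sigma> x i + int k) = \<sigma> (x i) ! k"
    unfolding img_seq_def n_def[symmetric] j_def[symmetric] Let_def by (simp add: n_def)
qed

lemma image_in_Y: "x \<in> X \<Longrightarrow> is_image_seq \<sigma> x y \<Longrightarrow> y \<in> image_shift \<sigma> X"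
  unfolding image_shift_def using ne[of "x 0"] by (intro CollectI exI[of _ x] exI[of _ y] exI[of _ 0]) auto

lemma lang_Y_I: "x \<in> X \<Longrightarrow> is_image_seq \<sigma> x y \<Longrightarrow> occurs_at w y i \<Longrightarrow> w \<in> lang (image_shift \<sigma> X)"
  unfolding lang_def using image_in_Y by blast

end

lemma lang_Y_D: "w \<in> lang (image_shift \<sigma> X) \<Longrightarrow> \<exists>x\<in>X. \<exists>y. is_image_seq \<sigma> x y \<and> (\<exists>i. occurs_at w y i)"
proof -
  assume "w \<in> lang (image_shift \<sigma> X)"
  then obtain z i where z: "z \<in> image_shift \<sigma> X" "occurs_at w z i" unfolding lang_def by blast
  then obtain x y k where xy: "z = (\<lambda>n. y (n + int k))" "x \<in> X" "is_image_seq \<sigma> x y"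
    unfolding image_shift_def by blast
  have "occurs_at w y (i + int k)" using z(2) unfolding xy(1) occurs_at_def by (simp add: ac_simps)
  then show ?thesis using xy by blast
qed

lemma morph_append: "morph \<sigma> (u @ w) = morph \<sigma> u @ morph \<sigma> w"
  unfolding morph_def by simp

lemma morph_Cons: "morph \<sigma> (a # w) = \<sigma> a @ morph \<sigma> w"
  unfolding morph_def by simp

lemma morph_Nil[simp]: "morph \<sigma> [] = []"
  unfolding morph_def by simp

lemma img_occurs:
  assumes "is_image_seq \<sigma> x y"
  shows "occurs_at (morph \<sigma> (map (\<lambda>t. x (i + int t)) [0..<m])) y (img_pos \<sigma> x i) \<and>
    img_pos \<sigma> x (i + int m) = img_pos \<sigma> x i + int (length (morph \<sigma> (map (\<lambda>t. x (i + int t)) [0..<m])))"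
proof (induction m)
  case 0 then show ?case by simp
next
  case (Suc m)
  let ?ws = "map (\<lambda>t. x (i + int t)) [0..<m]"
  have e: "map (\<lambda>t. x (i + int t)) [0..<Suc m] = ?ws @ [x (i + int m)]" by simp
  have blk: "occurs_at (\<sigma> (x (i + int m))) y (img_pos \<sigma> x (i + int m))"
    using assms unfolding is_image_seq_def occurs_at_def by blast
  have e2: "i + int (Suc m) = (i + int m) + 1" by simp
  have st: "img_pos \<sigma> x (i + int (Suc m)) = img_pos \<sigma> x (i + int m) + int (length (\<sigma> (x (i + int m))))"
    unfolding e2 by (rule img_pos_step)
  have m1: "morph \<sigma> (?ws @ [x (i + int m)]) = morph \<sigma> ?ws @ \<sigma> (x (i + int m))"
    by (simp add: morph_def)
  have o1: "occurs_at (morph \<sigma> ?ws) y (img_pos \<sigma> x i)" using Suc.IH by blast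
  have p1: "img_pos \<sigma> x (i + int m) = img_pos \<sigma> x i + int (length (morph \<sigma> ?ws))" using Suc.IH by blast
  have "occurs_at (morph \<sigma> ?ws @ \<sigma> (x (i + int m))) y (img_pos \<sigma> x i)"
    unfolding occurs_at_append using o1 blk p1 by simp
  moreover have "img_pos \<sigma> x (i + int (Suc m)) = img_pos \<sigma> x i + int (length (morph \<sigma> ?ws @ \<sigma> (x (i + int m))))"
    using st p1 by simp
  ultimately show ?case unfolding e m1 by blast
qed


lemma lang_ext_L: "c # u \<in> lang Z \<longleftrightarrow> (\<exists>d. c # u @ [d] \<in> lang Z)"
proof
  assume "c # u \<in> lang Z"
  then obtain z i where z: "z \<in> Z" "occurs_at (c # u) z i" unfolding lang_def by blast
  have "occurs_at ((c # u) @ [z (i + int (length (c # u)))]) z i"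
    unfolding occurs_at_append using z(2) by (simp add: occurs_at_def)
  then have "occurs_at (c # u @ [z (i + int (length (c # u)))]) z i" by simp
  then show "\<exists>d. c # u @ [d] \<in> lang Z" using z(1) unfolding lang_def by blast
next
  assume "\<exists>d. c # u @ [d] \<in> lang Z"
  then obtain d z i where z: "z \<in> Z" "occurs_at (c # u @ [d]) z i" unfolding lang_def by blast
  then have z2: "occurs_at ((c # u) @ [d]) z i" by simp
  have "occurs_at (c # u) z i" using z2 unfolding occurs_at_append by blast
  then show "c # u \<in> lang Z" using z(1) unfolding lang_def by blast
qed

lemma lang_ext_R: "u @ [d] \<in> lang Z \<longleftrightarrow> (\<exists>c. c # u @ [d] \<in> lang Z)"
proof
  assume "u @ [d] \<in> lang Z"
  then obtain z i where z: "z \<in> Z" "occurs_at (u @ [d]) z i" unfolding lang_def by blast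
  have "occurs_at (z (i - 1) # u @ [d]) z (i - 1)"
    unfolding occurs_at_Cons using z(2) by simp
  then show "\<exists>c. c # u @ [d] \<in> lang Z" using z(1) unfolding lang_def by blast
next
  assume "\<exists>c. c # u @ [d] \<in> lang Z"
  then obtain c z i where z: "z \<in> Z" "occurs_at (c # u @ [d]) z i" unfolding lang_def by blast
  then have "occurs_at (u @ [d]) z (i + 1)" unfolding occurs_at_Cons by blast
  then show "u @ [d] \<in> lang Z" using z(1) unfolding lang_def by blast
qed

lemma lang_mid: "c # u @ [d] \<in> lang Z \<Longrightarrow> u \<in> lang Z"
proof -
  assume "c # u @ [d] \<in> lang Z"
  then obtain z i where z: "z \<in> Z" "occurs_at (c # u @ [d]) z i" unfolding lang_def by blast
  then have "occurs_at (u @ [d]) z (i + 1)" unfolding occurs_at_Cons by blast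
  then have "occurs_at u z (i + 1)" unfolding occurs_at_append by blast
  then show "u \<in> lang Z" using z(1) unfolding lang_def by blast
qed

lemma left_ext_fst: "left_ext Z u = fst ` ext Z u"
proof (intro set_eqI iffI)
  fix c assume "c \<in> left_ext Z u"
  then have "c # u \<in> lang Z" unfolding left_ext_def by simp
  then obtain d where "c # u @ [d] \<in> lang Z" using lang_ext_L[of c u Z] by blast
  then have "(c,d) \<in> ext Z u" unfolding ext_def by simp
  then show "c \<in> fst ` ext Z u" by (metis fst_conv image_eqI)
next
  fix c assume "c \<in> fst ` ext Z u"
  then obtain d where "(c,d) \<in> ext Z u" by auto
  then have "c # u @ [d] \<in> lang Z" unfolding ext_def by simp
  then have "c # u \<in> lang Z" using lang_ext_L[of c u Z] by blast
  then show "c \<in> left_ext Z u" unfolding left_ext_def by simp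
qed

lemma right_ext_snd: "right_ext Z u = snd ` ext Z u"
proof (intro set_eqI iffI)
  fix d assume "d \<in> right_ext Z u"
  then have "u @ [d] \<in> lang Z" unfolding right_ext_def by simp
  then obtain c where "c # u @ [d] \<in> lang Z" using lang_ext_R[of u d Z] by blast
  then have "(c,d) \<in> ext Z u" unfolding ext_def by simp
  then show "d \<in> snd ` ext Z u" by (metis snd_conv image_eqI)
next
  fix d assume "d \<in> snd ` ext Z u"
  then obtain c where "(c,d) \<in> ext Z u" by auto
  then have "c # u @ [d] \<in> lang Z" unfolding ext_def by simp
  then have "u @ [d] \<in> lang Z" using lang_ext_R[of u d Z] by blast
  then show "d \<in> right_ext Z u" unfolding right_ext_def by simp
qed

context mctx begin

lemma nth_l_zero: "\<sigma> a ! k = l \<Longrightarrow> k < length (\<sigma> a) \<Longrightarrow> k = 0"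
proof (rule ccontr)
  assume a: "\<sigma> a ! k = l" "k < length (\<sigma> a)" "k \<noteq> 0"
  have "\<sigma> a ! k = tl (\<sigma> a) ! (k - 1)" using a(3) sig_cons[of a] by (metis nth_Cons' )
  moreover have "k - 1 < length (tl (\<sigma> a))" using a by simp
  ultimately have "l \<in> set (tl (\<sigma> a))" using a(1) by (metis nth_mem)
  then show False using sig_tl by blast
qed

lemma block_start: "is_image_seq \<sigma> x y \<Longrightarrow> y (img_pos \<sigma> x j) = l"
proof -
  assume "is_image_seq \<sigma> x y"
  then have "y (img_pos \<sigma> x j + int 0) = \<sigma> (x j) ! 0" unfolding is_image_seq_def using sig_ne by blast
  then show ?thesis using sig_cons[of "x j"] by (metis add.right_neutral nth_Cons_0 of_nat_0)
qed

lemma parse_l: "is_image_seq \<sigma> x y \<Longrightarrow> y n = l \<Longrightarrow> \<exists>j. n = img_pos \<sigma> x j"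
proof -
  assume a: "is_image_seq \<sigma> x y" "y n = l"
  obtain j where j: "img_pos \<sigma> x j \<le> n" "n < img_pos \<sigma> x (j + 1)" using block_ex[of \<sigma>, OF sig_ne] by blast
  define k where "k = nat (n - img_pos \<sigma> x j)"
  have nk: "n = img_pos \<sigma> x j + int k" unfolding k_def using j by simp
  have kl: "k < length (\<sigma> (x j))" using j(2) nk img_pos_step[of \<sigma> x j] by simp
  have "y n = \<sigma> (x j) ! k" using a(1) kl unfolding is_image_seq_def nk by blast
  then have "k = 0" using nth_l_zero a(2) kl by simp
  then show ?thesis using nk by auto
qed

lemma block_eq:
  assumes im: "is_image_seq \<sigma> x y" and oc: "occurs_at (\<sigma> a) y (img_pos \<sigma> x j)"
    and nx: "y (img_pos \<sigma> x j + int (length (\<sigma> a))) = l"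
  shows "x j = a"
proof -
  let ?P = "img_pos \<sigma> x j"
  let ?m = "length (\<sigma> (x j))"
  have b1: "y (?P + int t) = \<sigma> (x j) ! t" if "t < ?m" for t using im that unfolding is_image_seq_def by blast
  have b2: "y (?P + int t) = \<sigma> a ! t" if "t < length (\<sigma> a)" for t using oc that unfolding occurs_at_def by blast
  have b3: "y (?P + int ?m) = l" using block_start[OF im, of "j + 1"] img_pos_step[of \<sigma> x j] by simp
  have m1: "?m \<ge> 1" "length (\<sigma> a) \<ge> 1" using sig_ne by (simp_all add: Suc_leI)
  have eqlen: "?m = length (\<sigma> a)"
  proof (rule ccontr)
    assume "?m \<noteq> length (\<sigma> a)"
    then have "?m < length (\<sigma> a) \<or> length (\<sigma> a) < ?m" by linarith
    then show False
    proof
      assume lt: "?m < length (\<sigma> a)"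
      then have "\<sigma> a ! ?m = l" using b2 b3 by metis
      then have "?m = 0" using nth_l_zero lt by blast
      then show False using m1 by simp
    next
      assume lt: "length (\<sigma> a) < ?m"
      then have "\<sigma> (x j) ! length (\<sigma> a) = l" using b1 nx by metis
      then have "length (\<sigma> a) = 0" using nth_l_zero lt by blast
      then show False using m1 by simp
    qed
  qed
  have "\<sigma> (x j) = \<sigma> a"
    by (rule nth_equalityI) (use eqlen b1 b2 in auto)
  then show ?thesis using inj by (simp add: inj_eq)
qed

lemma hd_morph_app: "p \<noteq> [] \<Longrightarrow> hd p = l \<Longrightarrow> morph \<sigma> w @ p \<noteq> [] \<and> hd (morph \<sigma> w @ p) = l"
proof (cases w)
  case Nil
  then show "p \<noteq> [] \<Longrightarrow> hd p = l \<Longrightarrow> ?thesis" by simp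
next
  case (Cons a w')
  have "morph \<sigma> w @ p = \<sigma> a @ (morph \<sigma> w' @ p)" unfolding Cons morph_Cons by simp
  then show "p \<noteq> [] \<Longrightarrow> hd p = l \<Longrightarrow> ?thesis" using sig_cons[of a] sig_ne[of a] by (metis hd_append2 list.sel(1) Nil_is_append_conv)
qed

lemma parse_mid:
  assumes im: "is_image_seq \<sigma> x y" and pn: "p \<noteq> []" "hd p = l"
  shows "occurs_at (morph \<sigma> w @ p) y (img_pos \<sigma> x j) \<Longrightarrow>
    (\<forall>t<length w. x (j + int t) = w ! t) \<and> img_pos \<sigma> x (j + int (length w)) = img_pos \<sigma> x j + int (length (morph \<sigma> w))"
proof (induction w arbitrary: j)
  case Nil then show ?case by simp
next
  case (Cons a w)
  let ?P = "img_pos \<sigma> x j"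
  have oc: "occurs_at (\<sigma> a) y ?P" "occurs_at (morph \<sigma> w @ p) y (?P + int (length (\<sigma> a)))"
    using Cons.prems unfolding morph_Cons append_assoc occurs_at_append by auto
  obtain hh where hh: "morph \<sigma> w @ p \<noteq> []" "hd (morph \<sigma> w @ p) = l" using hd_morph_app[OF pn] by blast
  have "y (?P + int (length (\<sigma> a)) + int 0) = (morph \<sigma> w @ p) ! 0"
    using oc(2) hh(1) unfolding occurs_at_def by blast
  then have nx: "y (?P + int (length (\<sigma> a))) = l" using hh by (simp add: hd_conv_nth)
  have xj: "x j = a" by (rule block_eq[OF im oc(1) nx])
  have st: "img_pos \<sigma> x (j + 1) = ?P + int (length (\<sigma> a))" using img_pos_step[of \<sigma> x j] xj by simp
  have IH: "(\<forall>t<length w. x (j + 1 + int t) = w ! t) \<and>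
      img_pos \<sigma> x (j + 1 + int (length w)) = img_pos \<sigma> x (j + 1) + int (length (morph \<sigma> w))"
    using Cons.IH oc(2) st by simp
  have A: "\<forall>t<length (a # w). x (j + int t) = (a # w) ! t"
  proof (intro allI impI)
    fix t assume t: "t < length (a # w)"
    show "x (j + int t) = (a # w) ! t"
    proof (cases t)
      case 0 then show ?thesis using xj by simp
    next
      case (Suc t')
      then have "x (j + 1 + int t') = w ! t'" using IH t by simp
      moreover have "j + int t = j + 1 + int t'" using Suc by simp
      ultimately show ?thesis using Suc by (simp only: nth_Cons_Suc)
    qed
  qed
  have e: "j + int (length (a # w)) = j + 1 + int (length w)" by simp
  have B: "img_pos \<sigma> x (j + int (length (a # w))) = ?P + int (length (morph \<sigma> (a # w)))"
    unfolding e using IH st by (simp add: morph_Cons)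
  show ?case using A B by blast
qed

end


context mctx begin

lemma ext_Y_sub:
  assumes gs: "l \<notin> set s" and gp: "p \<noteq> []" "hd p = l" "l \<notin> set (tl p)"
    and w: "c # (s @ morph \<sigma> v @ p) @ [d] \<in> lang (image_shift \<sigma> X)"
  shows "(c,d) \<in> Qsp (ext X v) s p"
proof -
  let ?M = "morph \<sigma> v"
  obtain x y q where xy: "x \<in> X" "is_image_seq \<sigma> x y" "occurs_at (c # (s @ ?M @ p) @ [d]) y q"
    using lang_Y_D[OF w] by blast
  have W: "c # (s @ ?M @ p) @ [d] = (c # s) @ (?M @ (p @ [d]))" by simp
  define P0 where "P0 = q + int (length (c # s))"
  have o1: "occurs_at (c # s) y q" and o2: "occurs_at (?M @ (p @ [d])) y P0"
    using xy(3) unfolding W occurs_at_append P0_def by auto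
  have pd: "p @ [d] \<noteq> []" "hd (p @ [d]) = l" using gp by auto
  have hh: "?M @ (p @ [d]) \<noteq> []" "hd (?M @ (p @ [d])) = l" using hd_morph_app[OF pd] by auto
  have "y (P0 + int 0) = (?M @ (p @ [d])) ! 0" using occurs_at_nth[OF o2] hh(1) by blast
  then have "y P0 = l" using hh by (simp add: hd_conv_nth)
  then obtain j where P0j: "P0 = img_pos \<sigma> x j" using parse_l[OF xy(2)] by blast
  have pm: "(\<forall>t<length v. x (j + int t) = v ! t) \<and> img_pos \<sigma> x (j + int (length v)) = P0 + int (length ?M)"
    using parse_mid[OF xy(2) pd, of v j] o2 P0j by simp
  define a' where "a' = x (j - 1)"
  define b' where "b' = x (j + int (length v))"
  have edge: "(a', b') \<in> ext X v"
  proof -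
    have "occurs_at (a' # v @ [b']) x (j - 1)"
      unfolding occurs_at_def
    proof (intro allI impI)
      fix k assume k: "k < length (a' # v @ [b'])"
      show "x (j - 1 + int k) = (a' # v @ [b']) ! k"
      proof (cases k)
        case 0 then show ?thesis unfolding a'_def by simp
      next
        case (Suc k')
        then have e: "j - 1 + int k = j + int k'" by simp
        show ?thesis
        proof (cases "k' < length v")
          case True then show ?thesis unfolding e using pm Suc by (simp add: nth_append)
        next
          case False then have "k' = length v" using k Suc by simp
          then show ?thesis unfolding e b'_def using Suc by (simp add: nth_append)
        qed
      qed
    qed
    then show ?thesis unfolding ext_def lang_def using xy(1) by blast
  qed
  let ?m = "length (\<sigma> a')"
  have stp: "img_pos \<sigma> x j = img_pos \<sigma> x (j - 1) + int ?m"
    using img_pos_step[of \<sigma> x "j - 1"] unfolding a'_def by simp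
  have sm: "length s < ?m"
  proof (rule ccontr)
    assume "\<not> length s < ?m"
    then have le: "?m \<le> length s" by simp
    have m1: "?m \<ge> 1" using sig_ne by (simp add: Suc_leI)
    define k where "k = length s + 1 - ?m"
    have kk: "k < length (c # s)" "k \<ge> 1" using le m1 unfolding k_def by auto
    have pos: "q + int k = img_pos \<sigma> x (j - 1)" using stp P0j le unfolding P0_def k_def by simp
    have "y (q + int k) = (c # s) ! k" using occurs_at_nth[OF o1 kk(1)] .
    moreover have "y (img_pos \<sigma> x (j - 1)) = l" using block_start[OF xy(2)] .
    ultimately have "(c # s) ! k = l" using pos by simp
    then have "s ! (k - 1) = l" using kk(2) by (cases k) auto
    moreover have "k - 1 < length s" using kk by simp
    ultimately show False using gs nth_mem by metis
  qed
  define k0 where "k0 = ?m - length s - 1"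
  have cs: "c # s = drop k0 (\<sigma> a')"
  proof (rule nth_equalityI)
    show "length (c # s) = length (drop k0 (\<sigma> a'))" using sm unfolding k0_def by simp
    fix i assume i: "i < length (c # s)"
    have ik: "k0 + i < ?m" using i sm unfolding k0_def by simp
    have A: "y (img_pos \<sigma> x (j - 1) + int (k0 + i)) = \<sigma> a' ! (k0 + i)"
      using xy(2) ik unfolding is_image_seq_def a'_def by blast
    have B: "img_pos \<sigma> x (j - 1) + int (k0 + i) = q + int i"
      using stp P0j sm i unfolding P0_def k0_def by simp
    have C: "y (q + int i) = (c # s) ! i" using occurs_at_nth[OF o1 i] .
    have D: "drop k0 (\<sigma> a') ! i = \<sigma> a' ! (k0 + i)" using ik by simp
    show "(c # s) ! i = drop k0 (\<sigma> a') ! i" using A B C D by metis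
  qed
  have suf: "suffix (c # s) (\<sigma> a')" unfolding cs by (rule suffix_drop)
  define P1 where "P1 = P0 + int (length ?M)"
  have P1j: "P1 = img_pos \<sigma> x (j + int (length v))" using pm unfolding P1_def by simp
  have o3: "occurs_at (p @ [d]) y P1" using o2 unfolding occurs_at_append P1_def by blast
  let ?m' = "length (\<sigma> b')"
  have stp': "img_pos \<sigma> x (j + int (length v) + 1) = P1 + int ?m'"
    using img_pos_step[of \<sigma> x "j + int (length v)"] P1j unfolding b'_def by simp
  have bl: "y (P1 + int ?m') = l" using block_start[OF xy(2), of "j + int (length v) + 1"] stp' by simp
  have pm': "length p \<le> ?m'"
  proof (rule ccontr)
    assume "\<not> length p \<le> ?m'"
    then have lt: "?m' < length p" by simp
    have m1: "?m' \<ge> 1" using sig_ne by (simp add: Suc_leI)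
    have "y (P1 + int ?m') = (p @ [d]) ! ?m'" using occurs_at_nth[OF o3] lt by simp
    then have "p ! ?m' = l" using lt bl by (simp add: nth_append)
    then have "tl p ! (?m' - 1) = l" using m1 gp(1) by (cases p) (auto simp: nth_Cons')
    moreover have "?m' - 1 < length (tl p)" using lt m1 by simp
    ultimately show False using gp(3) nth_mem by metis
  qed
  have pd_eq: "p @ [d] = take (Suc (length p)) (\<sigma> b' @ [l])"
  proof (rule nth_equalityI)
    show "length (p @ [d]) = length (take (Suc (length p)) (\<sigma> b' @ [l]))" using pm' by simp
    fix i assume i: "i < length (p @ [d])"
    have yi: "y (P1 + int i) = (p @ [d]) ! i" using occurs_at_nth[OF o3 i] .
    show "(p @ [d]) ! i = take (Suc (length p)) (\<sigma> b' @ [l]) ! i"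
    proof (cases "i < ?m'")
      case True
      have "y (P1 + int i) = \<sigma> b' ! i" using xy(2) True P1j unfolding is_image_seq_def b'_def by metis
      then show ?thesis using yi True i by (simp add: nth_append)
    next
      case False
      then have "i = ?m'" using i pm' by simp
      then show ?thesis using yi i bl by (simp add: nth_append)
    qed
  qed
  have pre: "prefix (p @ [d]) (\<sigma> b' @ [l])" unfolding pd_eq by (rule take_is_prefix)
  show ?thesis unfolding Qsp_def using edge suf pre by blast
qed

lemma Qsp_sub_Y:
  assumes q: "(c,d) \<in> Qsp (ext X v) s p"
  shows "c # (s @ morph \<sigma> v @ p) @ [d] \<in> lang (image_shift \<sigma> X)"
proof -
  obtain a b where ab: "(a,b) \<in> ext X v" "suffix (c # s) (\<sigma> a)" "prefix (p @ [d]) (\<sigma> b @ [l])"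
    using q unfolding Qsp_def by blast
  obtain x i where x: "x \<in> X" "occurs_at (a # v @ [b]) x i" using ab(1) unfolding ext_def lang_def by blast
  define e where "e = x (i + int (length v + 2))"
  have ws: "map (\<lambda>t. x (i + int t)) [0..<length v + 3] = (a # v @ [b]) @ [e]"
  proof (rule nth_equalityI)
    show "length (map (\<lambda>t. x (i + int t)) [0..<length v + 3]) = length ((a # v @ [b]) @ [e])" by simp
    fix t assume t: "t < length (map (\<lambda>t. x (i + int t)) [0..<length v + 3])"
    show "map (\<lambda>t. x (i + int t)) [0..<length v + 3] ! t = ((a # v @ [b]) @ [e]) ! t"
    proof (cases "t < length v + 2")
      case True
      have "x (i + int t) = (a # v @ [b]) ! t" using occurs_at_nth[OF x(2)] True by simp
      moreover have "((a # v @ [b]) @ [e]) ! t = (a # v @ [b]) ! t"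
        using nth_append[of "a # v @ [b]" "[e]" t] True by simp
      ultimately show ?thesis using t by simp
    next
      case False then have "t = length v + 2" using t by simp
      then show ?thesis unfolding e_def by (simp add: nth_append)
    qed
  qed
  define y where "y = img_seq \<sigma> x"
  have im: "is_image_seq \<sigma> x y" unfolding y_def by (rule img_seq_is[of \<sigma>, OF sig_ne])
  have oc: "occurs_at (morph \<sigma> ((a # v @ [b]) @ [e])) y (img_pos \<sigma> x i)"
    using img_occurs[OF im, of i "length v + 3"] unfolding ws by blast
  obtain A1 where A1: "\<sigma> a = A1 @ (c # s)" using ab(2) unfolding suffix_def by blast
  obtain B2 where B2: "\<sigma> b @ [l] = (p @ [d]) @ B2" using ab(3) unfolding prefix_def by blast
  have "morph \<sigma> ((a # v @ [b]) @ [e]) = \<sigma> a @ morph \<sigma> v @ \<sigma> b @ \<sigma> e" by (simp add: morph_def)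
  also have "\<sigma> b @ \<sigma> e = (\<sigma> b @ [l]) @ tl (\<sigma> e)" using sig_cons[of e] by (metis append.assoc append_Cons append_Nil)
  also have "\<sigma> a @ morph \<sigma> v @ (\<sigma> b @ [l]) @ tl (\<sigma> e) =
      A1 @ (c # (s @ morph \<sigma> v @ p) @ [d]) @ (B2 @ tl (\<sigma> e))" unfolding A1 B2 by simp
  finally have "occurs_at (A1 @ (c # (s @ morph \<sigma> v @ p) @ [d]) @ (B2 @ tl (\<sigma> e))) y (img_pos \<sigma> x i)"
    using oc by simp
  then have "occurs_at (c # (s @ morph \<sigma> v @ p) @ [d]) y (img_pos \<sigma> x i + int (length A1))"
    unfolding occurs_at_append by blast
  then show ?thesis by (rule lang_Y_I[of \<sigma>, OF sig_ne x(1) im])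
qed

lemma extY:
  assumes gs: "l \<notin> set s" and gp: "p \<noteq> []" "hd p = l" "l \<notin> set (tl p)"
  shows "ext (image_shift \<sigma> X) (s @ morph \<sigma> v @ p) = Qsp (ext X v) s p"
proof (intro set_eqI)
  fix z :: "'b \<times> 'b"
  obtain c d where z: "z = (c,d)" by fastforce
  have e: "z \<in> ext (image_shift \<sigma> X) (s @ morph \<sigma> v @ p) \<longleftrightarrow>
      c # (s @ morph \<sigma> v @ p) @ [d] \<in> lang (image_shift \<sigma> X)"
    unfolding z ext_def by simp
  show "z \<in> ext (image_shift \<sigma> X) (s @ morph \<sigma> v @ p) \<longleftrightarrow> z \<in> Qsp (ext X v) s p"
    using e z ext_Y_sub[OF assms, where c=c and d=d and X=X and v=v]
      Qsp_sub_Y[where c=c and d=d and X=X and v=v and s=s and p=p] by blast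
qed

end


context mctx begin

lemma Gsp_ext_xy: "ext_xy \<sigma> l X v s p = Gsp (ext X v) s p"
proof -
  have "left_ext X v = fst ` ext X v" "right_ext X v = snd ` ext X v"
    by (rule left_ext_fst, rule right_ext_snd)
  then show ?thesis unfolding ext_xy_def left_ext_x_def right_ext_y_def Gsp_def by force
qed

lemma ext_xy_tree_iff:
  "ext_xy_tree \<sigma> l X v s p \<longleftrightarrow> ug_tree (Vof (Gsp (ext X v) s p)) (bip_adj (Gsp (ext X v) s p))"
  unfolding ext_xy_tree_def Gsp_ext_xy bip_tree_Vof ..

lemma dendric_Y_iff:
  assumes "l \<notin> set s" "p \<noteq> []" "hd p = l" "l \<notin> set (tl p)"
  shows "dendric (image_shift \<sigma> X) (s @ morph \<sigma> v @ p) \<longleftrightarrow>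
    (s @ morph \<sigma> v @ p) \<in> lang (image_shift \<sigma> X) \<and>
    ug_tree (Vof (Qsp (ext X v) s p)) (bip_adj (Qsp (ext X v) s p))"
  unfolding dendric_def left_ext_fst right_ext_snd extY[OF assms] bip_tree_Vof ..

lemma bispecial_Y_iff:
  assumes "l \<notin> set s" "p \<noteq> []" "hd p = l" "l \<notin> set (tl p)"
  shows "bispecial (image_shift \<sigma> X) (s @ morph \<sigma> v @ p) \<longleftrightarrow>
    (s @ morph \<sigma> v @ p) \<in> lang (image_shift \<sigma> X) \<and>
    2 \<le> card (fst ` Qsp (ext X v) s p) \<and> 2 \<le> card (snd ` Qsp (ext X v) s p)"
  unfolding bispecial_def left_ext_fst right_ext_snd extY[OF assms] ..

lemma lcs_proper:
  assumes "a1 \<noteq> a2" shows "lcs (\<sigma> a1) (\<sigma> a2) \<noteq> \<sigma> a1"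
proof
  assume "lcs (\<sigma> a1) (\<sigma> a2) = \<sigma> a1"
  then have "suffix (\<sigma> a1) (\<sigma> a2)" using lcs_suffix2 by metis
  then show False using suffix_sig_inj assms by blast
qed

lemma lcp_ne: "lcp (\<sigma> b1) (\<sigma> b2) \<noteq> []"
  using sig_cons[of b1] sig_cons[of b2] by (metis lcp.simps(1) list.distinct(1))

lemma s0_facts:
  assumes L: "a1 \<in> left_ext X v" "a2 \<in> left_ext X v" "a1 \<noteq> a2"
  shows "s_zero \<sigma> X v \<in> T_minus \<sigma> X v \<and> (\<forall>a\<in>left_ext X v. suffix (s_zero \<sigma> X v) (\<sigma> a))"
proof -
  let ?L = "left_ext X v"
  let ?P = "\<lambda>s. s \<in> T_minus \<sigma> X v \<union> \<sigma> ` ?L"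
  let ?s0 = "s_zero \<sigma> X v"
  have Pk: "?P (lcs (\<sigma> a1) (\<sigma> a2))" unfolding T_minus_def using L by blast
  have am: "?P ?s0" "\<And>y. ?P y \<Longrightarrow> length ?s0 \<le> length y"
    using arg_min_nat_lemma[of ?P _ length, OF Pk] unfolding s_zero_def by auto
  have inT: "?s0 \<in> T_minus \<sigma> X v"
  proof (rule ccontr)
    assume "?s0 \<notin> T_minus \<sigma> X v"
    then obtain a where a: "a \<in> ?L" "?s0 = \<sigma> a" using am(1) by blast
    obtain a' where a': "a' \<in> ?L" "a' \<noteq> a" using L by metis
    let ?t = "lcs (\<sigma> a) (\<sigma> a')"
    have "?P ?t" unfolding T_minus_def using a a' by blast
    then have "length ?s0 \<le> length ?t" using am(2) by blast
    moreover have "length ?t < length (\<sigma> a)"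
      using suffix_neq_length[OF lcs_suffix1 lcs_proper[OF a'(2)[symmetric]]] .
    ultimately show False using a(2) by simp
  qed
  then obtain c1 c2 where c: "c1 \<in> ?L" "c2 \<in> ?L" "c1 \<noteq> c2" "?s0 = lcs (\<sigma> c1) (\<sigma> c2)"
    unfolding T_minus_def by blast
  have "suffix ?s0 (\<sigma> a)" if a: "a \<in> ?L" for a
  proof (cases "a = c1")
    case True then show ?thesis using c(4) lcs_suffix1 by metis
  next
    case False
    let ?t = "lcs (\<sigma> a) (\<sigma> c1)"
    have "?P ?t" unfolding T_minus_def using a c False by blast
    then have "length ?s0 \<le> length ?t" using am(2) by blast
    moreover have "suffix ?s0 (\<sigma> c1)" using c(4) lcs_suffix1 by metis
    moreover have "suffix ?t (\<sigma> c1)" by (rule lcs_suffix2)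
    ultimately have "suffix ?s0 ?t" using suffix_length_suffix by blast
    then show ?thesis using lcs_suffix1 suffix_order.trans by blast
  qed
  then show ?thesis using inT by blast
qed

lemma p0_facts:
  assumes R: "b1 \<in> right_ext X v" "b2 \<in> right_ext X v" "b1 \<noteq> b2"
  shows "p_zero \<sigma> l X v \<in> T_plus \<sigma> X v \<and> p_zero \<sigma> l X v \<noteq> [] \<and>
    (\<forall>b\<in>right_ext X v. prefix (p_zero \<sigma> l X v) (\<sigma> b))"
proof -
  let ?R = "right_ext X v"
  let ?P = "\<lambda>p. p \<in> T_plus \<sigma> X v \<union> (\<lambda>b. \<sigma> b @ [l]) ` ?R"
  let ?p0 = "p_zero \<sigma> l X v"
  have Pk: "?P (lcp (\<sigma> b1) (\<sigma> b2))" unfolding T_plus_def using R by blast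
  have am: "?P ?p0" "\<And>y. ?P y \<Longrightarrow> length ?p0 \<le> length y"
    using arg_min_nat_lemma[of ?P _ length, OF Pk] unfolding p_zero_def by auto
  have inT: "?p0 \<in> T_plus \<sigma> X v"
  proof (rule ccontr)
    assume "?p0 \<notin> T_plus \<sigma> X v"
    then obtain b where b: "b \<in> ?R" "?p0 = \<sigma> b @ [l]" using am(1) by blast
    obtain b' where b': "b' \<in> ?R" "b' \<noteq> b" using R by metis
    let ?t = "lcp (\<sigma> b) (\<sigma> b')"
    have "?P ?t" unfolding T_plus_def using b b' by blast
    then have "length ?p0 \<le> length ?t" using am(2) by blast
    moreover have "length ?t \<le> length (\<sigma> b)" using prefix_length_le[OF lcp_prefix1] .
    ultimately show False using b(2) by simp
  qed
  then obtain c1 c2 where c: "c1 \<in> ?R" "c2 \<in> ?R" "c1 \<noteq> c2" "?p0 = lcp (\<sigma> c1) (\<sigma> c2)"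
    unfolding T_plus_def by blast
  have "prefix ?p0 (\<sigma> b)" if b: "b \<in> ?R" for b
  proof (cases "b = c1")
    case True then show ?thesis using c(4) lcp_prefix1 by metis
  next
    case False
    let ?t = "lcp (\<sigma> b) (\<sigma> c1)"
    have "?P ?t" unfolding T_plus_def using b c False by blast
    then have "length ?p0 \<le> length ?t" using am(2) by blast
    moreover have "prefix ?p0 (\<sigma> c1)" using c(4) lcp_prefix1 by metis
    moreover have "prefix ?t (\<sigma> c1)" by (rule lcp_prefix2)
    ultimately have "prefix ?p0 ?t" using prefix_length_prefix by blast
    then show ?thesis using lcp_prefix1 prefix_order.trans by blast
  qed
  moreover have "?p0 \<noteq> []" using c(4) lcp_ne by simp
  ultimately show ?thesis using inT by blast
qed

end


lemma card_two: "2 \<le> card S \<Longrightarrow> \<exists>x y. x \<in> S \<and> y \<in> S \<and> x \<noteq> y"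
proof -
  assume c: "2 \<le> card S"
  then have fin: "finite S" "S \<noteq> {}" using card_eq_0_iff by fastforce+
  then obtain x where x: "x \<in> S" by blast
  have "card (S - {x}) \<ge> 1" using c fin x by simp
  then have "S - {x} \<noteq> {}" by (metis card.empty not_one_le_zero)
  then obtain y where "y \<in> S - {x}" by blast
  then show ?thesis using x by blast
qed

context mctx begin

lemma HT_derive:
  assumes T: "ug_tree (Vof (ext X v)) (bip_adj (ext X v))"
    and R: "b1 \<in> right_ext X v" "b2 \<in> right_ext X v" "b1 \<noteq> b2"
    and Lw: "a1 \<in> left_ext X v" "a2 \<in> left_ext X v" "a1 \<noteq> a2"
    and C1: "\<forall>s \<in> T_minus \<sigma> X v - {s_zero \<sigma> X v}. ext_xy_tree \<sigma> l X v s (p_zero \<sigma> l X v)"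
    and ne: "Gsp (ext X v) s' [] \<noteq> {}"
  shows "ug_connected (Vof (Gsp (ext X v) s' [])) (bip_adj (Gsp (ext X v) s' []))"
proof -
  let ?G = "ext X v"
  let ?L = "left_ext X v"
  let ?H = "Gsp ?G s' []"
  have Lf: "?L = fst ` ?G" by (rule left_ext_fst)
  have Rf: "right_ext X v = snd ` ?G" by (rule right_ext_snd)
  obtain a0 b0 where ab0: "(a0,b0) \<in> ?H" using ne by auto
  show ?thesis
  proof (cases "\<forall>(a,b)\<in>?H. a = a0")
    case True then show ?thesis by (rule star_connected_L)
  next
    case nst: False
    show ?thesis
    proof (cases "\<forall>a\<in>?L. suffix s' (\<sigma> a)")
      case True
      have "?H = ?G" unfolding Gsp_def using True Lf by force
      then show ?thesis using T unfolding ug_tree_def by simp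
    next
      case False
      then obtain a3 where a3: "a3 \<in> ?L" "\<not> suffix s' (\<sigma> a3)" by blast
      define A' where "A' = fst ` ?H"
      have A'iff: "a \<in> A' \<longleftrightarrow> a \<in> ?L \<and> suffix s' (\<sigma> a)" for a
        unfolding A'_def Lf Gsp_def by force
      obtain a0' b0' where ab0': "(a0',b0') \<in> ?H" "a0' \<noteq> a0" using nst by auto
      have A0: "a0 \<in> A'" "a0' \<in> A'" unfolding A'_def using ab0 ab0' by force+
      define P where "P = (\<lambda>t. \<exists>x y. x \<in> A' \<and> y \<in> A' \<and> x \<noteq> y \<and> t = lcs (\<sigma> x) (\<sigma> y))"
      define s'' where "s'' = arg_min length P"
      have Pk: "P (lcs (\<sigma> a0) (\<sigma> a0'))" unfolding P_def using A0 ab0'(2) by blast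
      have am: "P s''" "\<And>t. P t \<Longrightarrow> length s'' \<le> length t"
        using arg_min_nat_lemma[of P _ length, OF Pk] unfolding s''_def by auto
      obtain e1 e2 where e: "e1 \<in> A'" "e2 \<in> A'" "e1 \<noteq> e2" "s'' = lcs (\<sigma> e1) (\<sigma> e2)"
        using am(1) unfolding P_def by blast
      have s's'': "suffix s' s''" unfolding e(4) using e A'iff lcs_max by blast
      have key: "suffix s'' (\<sigma> a) \<longleftrightarrow> a \<in> A'" if a: "a \<in> ?L" for a
      proof
        assume "suffix s'' (\<sigma> a)"
        then have "suffix s' (\<sigma> a)" using s's'' suffix_order.trans by blast
        then show "a \<in> A'" using A'iff a by blast
      next
        assume aA: "a \<in> A'"
        show "suffix s'' (\<sigma> a)"
        proof (cases "a = e1")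
          case True then show ?thesis using e(4) lcs_suffix1 by metis
        next
          case False
          let ?t = "lcs (\<sigma> a) (\<sigma> e1)"
          have "P ?t" unfolding P_def using aA e False by blast
          then have "length s'' \<le> length ?t" using am(2) by blast
          moreover have "suffix s'' (\<sigma> e1)" using e(4) lcs_suffix1 by metis
          moreover have "suffix ?t (\<sigma> e1)" by (rule lcs_suffix2)
          ultimately have "suffix s'' ?t" using suffix_length_suffix by blast
          then show ?thesis using lcs_suffix1 suffix_order.trans by blast
        qed
      qed
      have Heq: "Gsp ?G s'' [] = ?H"
      proof -
        have "suffix s'' (\<sigma> a) \<longleftrightarrow> suffix s' (\<sigma> a)" if "(a,b) \<in> ?G" for a b
        proof -
          have "a \<in> ?L" using that Lf by force
          then show ?thesis using key A'iff by blast
        qed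
        then show ?thesis unfolding Gsp_def by blast
      qed
      have inT: "s'' \<in> T_minus \<sigma> X v" unfolding T_minus_def using e A'iff by blast
      have s0f: "s_zero \<sigma> X v \<in> T_minus \<sigma> X v \<and> (\<forall>a\<in>?L. suffix (s_zero \<sigma> X v) (\<sigma> a))"
        by (rule s0_facts[OF Lw])
      have "\<not> suffix s'' (\<sigma> a3)" using key[OF a3(1)] A'iff a3 by blast
      then have neq: "s'' \<noteq> s_zero \<sigma> X v" using s0f a3(1) by blast
      have "ext_xy_tree \<sigma> l X v s'' (p_zero \<sigma> l X v)" using C1 inT neq by blast
      then have tr: "ug_tree (Vof (Gsp ?G s'' (p_zero \<sigma> l X v))) (bip_adj (Gsp ?G s'' (p_zero \<sigma> l X v)))"
        unfolding ext_xy_tree_iff .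
      have p0f: "\<forall>b\<in>right_ext X v. prefix (p_zero \<sigma> l X v) (\<sigma> b)" using p0_facts[OF R] by blast
      have "Gsp ?G s'' (p_zero \<sigma> l X v) = Gsp ?G s'' []"
      proof -
        have "prefix (p_zero \<sigma> l X v) (\<sigma> b @ [l])" if "(a,b) \<in> ?G" for a b
        proof -
          have "b \<in> right_ext X v" using that Rf by force
          then show ?thesis using p0f prefix_prefix by blast
        qed
        then show ?thesis unfolding Gsp_def by auto
      qed
      then show ?thesis using tr Heq unfolding ug_tree_def by simp
    qed
  qed
qed

lemma HU_derive:
  assumes T: "ug_tree (Vof (ext X v)) (bip_adj (ext X v))"
    and R: "b1 \<in> right_ext X v" "b2 \<in> right_ext X v" "b1 \<noteq> b2"
    and Lw: "a1 \<in> left_ext X v" "a2 \<in> left_ext X v" "a1 \<noteq> a2"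
    and C2: "\<forall>p \<in> T_plus \<sigma> X v - {p_zero \<sigma> l X v}. ext_xy_tree \<sigma> l X v (s_zero \<sigma> X v) p"
    and ne: "Gsp (ext X v) [] p' \<noteq> {}"
  shows "ug_connected (Vof (Gsp (ext X v) [] p')) (bip_adj (Gsp (ext X v) [] p'))"
proof -
  let ?G = "ext X v"
  let ?R = "right_ext X v"
  let ?H = "Gsp ?G [] p'"
  have Lf: "left_ext X v = fst ` ?G" by (rule left_ext_fst)
  have Rf: "?R = snd ` ?G" by (rule right_ext_snd)
  obtain a0 b0 where ab0: "(a0,b0) \<in> ?H" using ne by auto
  show ?thesis
  proof (cases "\<forall>(a,b)\<in>?H. b = b0")
    case True then show ?thesis by (rule star_connected_R)
  next
    case nst: False
    show ?thesis
    proof (cases "\<forall>b\<in>?R. prefix p' (\<sigma> b @ [l])")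
      case True
      have "?H = ?G" unfolding Gsp_def using True Rf by force
      then show ?thesis using T unfolding ug_tree_def by simp
    next
      case False
      then obtain b3 where b3: "b3 \<in> ?R" "\<not> prefix p' (\<sigma> b3 @ [l])" by blast
      define B' where "B' = snd ` ?H"
      have B'iff: "b \<in> B' \<longleftrightarrow> b \<in> ?R \<and> prefix p' (\<sigma> b @ [l])" for b
        unfolding B'_def Rf Gsp_def by force
      obtain a0' b0' where ab0': "(a0',b0') \<in> ?H" "b0' \<noteq> b0" using nst by auto
      have B0: "b0 \<in> B'" "b0' \<in> B'" unfolding B'_def using ab0 ab0' by force+
      define P where "P = (\<lambda>t. \<exists>x y. x \<in> B' \<and> y \<in> B' \<and> x \<noteq> y \<and> t = lcp (\<sigma> x) (\<sigma> y))"
      define p'' where "p'' = arg_min length P"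
      have Pk: "P (lcp (\<sigma> b0) (\<sigma> b0'))" unfolding P_def using B0 ab0'(2) by blast
      have am: "P p''" "\<And>t. P t \<Longrightarrow> length p'' \<le> length t"
        using arg_min_nat_lemma[of P _ length, OF Pk] unfolding p''_def by auto
      obtain e1 e2 where e: "e1 \<in> B'" "e2 \<in> B'" "e1 \<noteq> e2" "p'' = lcp (\<sigma> e1) (\<sigma> e2)"
        using am(1) unfolding P_def by blast
      have pe: "prefix p' (\<sigma> x)" if x: "x \<in> B'" "y \<in> B'" "x \<noteq> y" for x y
      proof -
        have h: "prefix p' (\<sigma> x @ [l])" "prefix p' (\<sigma> y @ [l])" using x B'iff by blast+
        have "p' \<noteq> \<sigma> x @ [l]"
        proof
          assume "p' = \<sigma> x @ [l]"
          then have "prefix (\<sigma> x @ [l]) (\<sigma> y @ [l])" using h(2) by simp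
          then show False using prefix_sigl_inj x(3) by blast
        qed
        then show ?thesis using h(1) prefix_snoc by metis
      qed
      have p'p'': "prefix p' p''" unfolding e(4) using pe[OF e(1,2,3)] pe[OF e(2,1) e(3)[symmetric]] lcp_max by blast
      have key: "prefix p'' (\<sigma> b @ [l]) \<longleftrightarrow> b \<in> B'" if b: "b \<in> ?R" for b
      proof
        assume "prefix p'' (\<sigma> b @ [l])"
        then have "prefix p' (\<sigma> b @ [l])" using p'p'' prefix_order.trans by blast
        then show "b \<in> B'" using B'iff b by blast
      next
        assume bB: "b \<in> B'"
        have "prefix p'' (\<sigma> b)"
        proof (cases "b = e1")
          case True then show ?thesis using e(4) lcp_prefix1 by metis
        next
          case False
          let ?t = "lcp (\<sigma> b) (\<sigma> e1)"
          have "P ?t" unfolding P_def using bB e False by blast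
          then have "length p'' \<le> length ?t" using am(2) by blast
          moreover have "prefix p'' (\<sigma> e1)" using e(4) lcp_prefix1 by metis
          moreover have "prefix ?t (\<sigma> e1)" by (rule lcp_prefix2)
          ultimately have "prefix p'' ?t" using prefix_length_prefix by blast
          then show ?thesis using lcp_prefix1 prefix_order.trans by blast
        qed
        then show "prefix p'' (\<sigma> b @ [l])" using prefix_prefix by blast
      qed
      have Heq: "Gsp ?G [] p'' = ?H"
      proof -
        have "prefix p'' (\<sigma> b @ [l]) \<longleftrightarrow> prefix p' (\<sigma> b @ [l])" if "(a,b) \<in> ?G" for a b
        proof -
          have "b \<in> ?R" using that Rf by force
          then show ?thesis using key B'iff by blast
        qed
        then show ?thesis unfolding Gsp_def by blast
      qed
      have inT: "p'' \<in> T_plus \<sigma> X v" unfolding T_plus_def using e B'iff by blast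
      have p0f: "p_zero \<sigma> l X v \<in> T_plus \<sigma> X v \<and> p_zero \<sigma> l X v \<noteq> [] \<and>
          (\<forall>b\<in>?R. prefix (p_zero \<sigma> l X v) (\<sigma> b))"
        by (rule p0_facts[OF R])
      have "\<not> prefix p'' (\<sigma> b3 @ [l])" using key[OF b3(1)] B'iff b3 by blast
      then have neq: "p'' \<noteq> p_zero \<sigma> l X v" using p0f b3(1) prefix_prefix by blast
      have "ext_xy_tree \<sigma> l X v (s_zero \<sigma> X v) p''" using C2 inT neq by blast
      then have tr: "ug_tree (Vof (Gsp ?G (s_zero \<sigma> X v) p'')) (bip_adj (Gsp ?G (s_zero \<sigma> X v) p''))"
        unfolding ext_xy_tree_iff .
      have s0f: "\<forall>a\<in>left_ext X v. suffix (s_zero \<sigma> X v) (\<sigma> a)" using s0_facts[OF Lw] by blast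
      have "Gsp ?G (s_zero \<sigma> X v) p'' = Gsp ?G [] p''"
      proof -
        have "suffix (s_zero \<sigma> X v) (\<sigma> a)" if "(a,b) \<in> ?G" for a b
        proof -
          have "a \<in> left_ext X v" using that Lf by force
          then show ?thesis using s0f by blast
        qed
        then show ?thesis unfolding Gsp_def by auto
      qed
      then show ?thesis using tr Heq unfolding ug_tree_def by simp
    qed
  qed
qed

end


context mctx begin

lemma main_equiv:
  assumes fin: "finite (ext X v)" and bisp: "bispecial X v" and dend: "dendric X v"
  shows "dendric_preserving \<sigma> X v \<longleftrightarrow>
     ((\<forall>s \<in> T_minus \<sigma> X v - {s_zero \<sigma> X v}. ext_xy_tree \<sigma> l X v s (p_zero \<sigma> l X v)) \<and>
      (\<forall>p \<in> T_plus \<sigma> X v - {p_zero \<sigma> l X v}. ext_xy_tree \<sigma> l X v (s_zero \<sigma> X v) p))"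
proof -
  let ?G = "ext X v"
  let ?Y = "image_shift \<sigma> X"
  let ?s0 = "s_zero \<sigma> X v"
  let ?p0 = "p_zero \<sigma> l X v"
  have Lf: "left_ext X v = fst ` ?G" by (rule left_ext_fst)
  have Rf: "right_ext X v = snd ` ?G" by (rule right_ext_snd)
  have T: "ug_tree (Vof ?G) (bip_adj ?G)"
    using dend unfolding dendric_def Lf Rf bip_tree_Vof by blast
  obtain a1 a2 where Lw: "a1 \<in> left_ext X v" "a2 \<in> left_ext X v" "a1 \<noteq> a2"
    using bisp card_two unfolding bispecial_def by blast
  obtain b1 b2 where Rw: "b1 \<in> right_ext X v" "b2 \<in> right_ext X v" "b1 \<noteq> b2"
    using bisp card_two unfolding bispecial_def by blast
  have s0f: "?s0 \<in> T_minus \<sigma> X v \<and> (\<forall>a\<in>left_ext X v. suffix ?s0 (\<sigma> a))" by (rule s0_facts[OF Lw])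
  have p0f: "?p0 \<in> T_plus \<sigma> X v \<and> ?p0 \<noteq> [] \<and> (\<forall>b\<in>right_ext X v. prefix ?p0 (\<sigma> b))" by (rule p0_facts[OF Rw])
  show ?thesis
  proof
    assume DPr: "dendric_preserving \<sigma> X v"
    have DP: "ug_tree (Vof (Qsp ?G s p)) (bip_adj (Qsp ?G s p))"
      if v: "valid ?G s p" and c1: "2 \<le> card (fst ` Qsp ?G s p)" and c2: "2 \<le> card (snd ` Qsp ?G s p)" for s p
    proof -
      obtain a b where ab: "(a,b) \<in> ?G" "suffix s (\<sigma> a)" "s \<noteq> \<sigma> a" "prefix p (\<sigma> b)" "p \<noteq> []"
        using v unfolding valid_def by blast
      have g: "l \<notin> set s" "p \<noteq> []" "hd p = l" "l \<notin> set (tl p)"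
        using valid_good[OF v] unfolding good_def by auto
      let ?u = "s @ morph \<sigma> v @ p"
      obtain c d where cd: "(c,d) \<in> Qsp ?G s p" using c1 card_two by fastforce
      have "c # ?u @ [d] \<in> lang ?Y" using Qsp_sub_Y[OF cd] by simp
      then have uL: "?u \<in> lang ?Y" by (rule lang_mid)
      have ei: "ext_image \<sigma> X v ?u" unfolding ext_image_def using uL ab by blast
      have bs: "bispecial ?Y ?u" unfolding bispecial_Y_iff[OF g] using uL c1 c2 by blast
      have "dendric ?Y ?u" using DPr ei bs unfolding dendric_preserving_def by blast
      then show ?thesis unfolding dendric_Y_iff[OF g] by blast
    qed
    have conn: "ug_connected (Vof (Gsp ?G s p)) (bip_adj (Gsp ?G s p))" if "valid ?G s p" for s p
      by (rule comb_fwd[OF T fin DP that])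
    have tr: "ug_tree (Vof (Gsp ?G s p)) (bip_adj (Gsp ?G s p))" if "valid ?G s p" for s p
      by (rule sub_tree[OF T Gsp_sub valid_Gsp[OF that] conn[OF that]])
    have P1: "ext_xy_tree \<sigma> l X v s ?p0" if s: "s \<in> T_minus \<sigma> X v - {?s0}" for s
    proof -
      obtain c1 c2 where c: "c1 \<in> left_ext X v" "c2 \<in> left_ext X v" "c1 \<noteq> c2" "s = lcs (\<sigma> c1) (\<sigma> c2)"
        using s unfolding T_minus_def by blast
      obtain b where b: "(c1, b) \<in> ?G" using c(1) Lf by force
      have bR: "b \<in> right_ext X v" using b Rf by force
      have "valid ?G s ?p0" unfolding valid_def
        using b c(4) lcs_suffix1 lcs_proper[OF c(3)] p0f bR by blast
      then show ?thesis unfolding ext_xy_tree_iff by (rule tr)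
    qed
    have P2: "ext_xy_tree \<sigma> l X v ?s0 p" if p: "p \<in> T_plus \<sigma> X v - {?p0}" for p
    proof -
      obtain c1 c2 where c: "c1 \<in> right_ext X v" "c2 \<in> right_ext X v" "c1 \<noteq> c2" "p = lcp (\<sigma> c1) (\<sigma> c2)"
        using p unfolding T_plus_def by blast
      obtain a where a: "(a, c1) \<in> ?G" using c(1) Rf by force
      have aL: "a \<in> left_ext X v" using a Lf by force
      obtain e1 e2 where e: "e1 \<noteq> e2" "?s0 = lcs (\<sigma> e1) (\<sigma> e2)" using s0f unfolding T_minus_def by blast
      have "l \<notin> set ?s0" using suffix_noL[OF lcs_suffix1 lcs_proper[OF e(1)]] e(2) by simp
      then have "?s0 \<noteq> \<sigma> a" by (rule noL_neq)
      moreover have "suffix ?s0 (\<sigma> a)" using s0f aL by blast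
      ultimately have "valid ?G ?s0 p" unfolding valid_def
        using a c(4) lcp_prefix1 lcp_ne by blast
      then show ?thesis unfolding ext_xy_tree_iff by (rule tr)
    qed
    show "(\<forall>s \<in> T_minus \<sigma> X v - {?s0}. ext_xy_tree \<sigma> l X v s ?p0) \<and>
      (\<forall>p \<in> T_plus \<sigma> X v - {?p0}. ext_xy_tree \<sigma> l X v ?s0 p)" using P1 P2 by blast
  next
    assume C: "(\<forall>s \<in> T_minus \<sigma> X v - {?s0}. ext_xy_tree \<sigma> l X v s ?p0) \<and>
      (\<forall>p \<in> T_plus \<sigma> X v - {?p0}. ext_xy_tree \<sigma> l X v ?s0 p)"
    have HT: "ug_connected (Vof (Gsp ?G s [])) (bip_adj (Gsp ?G s []))" if "Gsp ?G s [] \<noteq> {}" for s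
      using HT_derive[OF T Rw Lw _ that] C by blast
    have HU: "ug_connected (Vof (Gsp ?G [] p)) (bip_adj (Gsp ?G [] p))" if "Gsp ?G [] p \<noteq> {}" for p
      using HU_derive[OF T Rw Lw _ that] C by blast
    show "dendric_preserving \<sigma> X v" unfolding dendric_preserving_def
    proof (intro allI impI)
      fix u assume ei: "ext_image \<sigma> X v u" and "bispecial ?Y u"
      obtain a b s p where ab: "u \<in> lang ?Y" "(a,b) \<in> ?G" "suffix s (\<sigma> a)" "s \<noteq> \<sigma> a"
        "prefix p (\<sigma> b)" "p \<noteq> []" "u = s @ morph \<sigma> v @ p"
        using ei unfolding ext_image_def by blast
      have gs: "l \<notin> set s" using suffix_noL ab(3,4) by blast
      have gp: "hd p = l \<and> l \<notin> set (tl p)" using prefix_good ab(5,6) by blast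
      have g: "good s p" unfolding good_def using gs gp ab(6) by blast
      have ne: "Gsp ?G s p \<noteq> {}" unfolding Gsp_def using ab(2,3,5) prefix_prefix by blast
      have "ug_tree (Vof (Qsp ?G s p)) (bip_adj (Qsp ?G s p))"
        by (rule comb_back[OF T fin HT HU g ne])
      then show "dendric ?Y u" unfolding ab(7) dendric_Y_iff[OF gs ab(6) conjunct1[OF gp] conjunct2[OF gp]]
        using ab(1,7) by blast
    qed
  qed
qed

end

theorem proposition4p5:
  fixes X :: "(int \<Rightarrow> 'a::finite) set"
    and \<sigma> :: "'a \<Rightarrow> 'b::finite list"
    and l :: 'b
    and v :: "'a list"
  assumes "shift_space X"
    and "bispecial X v"
    and "dendric X v"
    and "inj (morph \<sigma>)"
    and "strongly_left_proper \<sigma> l"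
  shows "dendric_preserving \<sigma> X v \<longleftrightarrow>
     ((\<forall>s \<in> T_minus \<sigma> X v - {s_zero \<sigma> X v}. ext_xy_tree \<sigma> l X v s (p_zero \<sigma> l X v)) \<and>
      (\<forall>p \<in> T_plus \<sigma> X v - {p_zero \<sigma> l X v}. ext_xy_tree \<sigma> l X v (s_zero \<sigma> X v) p))"
proof -
  have injs: "inj \<sigma>"
  proof (rule injI)
    fix a b assume "\<sigma> a = \<sigma> b"
    then have "morph \<sigma> [a] = morph \<sigma> [b]" unfolding morph_def by simp
    then show "a = b" using assms(4) by (simp add: inj_eq)
  qed
  interpret m: mctx \<sigma> l by (unfold_locales) (fact assms(5), fact injs)
  have f: "finite (ext X v)" by (rule finite_subset[OF subset_UNIV]) simp
  show ?thesis by (rule m.main_equiv[OF f assms(2,3)])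
qed


end
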